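(* Let $(X,d)$ be a u.l.f. metric space, $h\colon X\to\mathbb{R}$ a bounded map, and $\beta\in\mathbb{R}$. Then $\mathrm{C}^*_u(X)$ has a $(\sigma_h,\beta)$-KMS state if and only if $X$ is amenable.
   Context: A metric space is u.l.f. if for every $r>0$ the cardinalities of its balls of radius $r$ are uniformly bounded. $\mathrm{C}^*_u(X)$ is the norm closure of the $^*$-algebra of operators $a$ on $\ell_2(X)$ with $\sup\{d(x,y):\langle a\delta_y,\delta_x\rangle\neq0\}<\infty$. $\sigma_{h,t}(a)=e^{it\bar h}ae^{-it\bar h}$ with $\bar h$ the diagonal operator $\delta_x\mapsto h(x)\delta_x$. A state $\varphi$ is $(\sigma_h,\beta)$-KMS if $\varphi(a\sigma_{h,i\beta}(b))=\varphi(ba)$ for all $a$ and all analytic $b$ (those for which $t\mapsto\sigma_{h,t}(b)$ extends to an entire function). A partial translation is a bijection $f\colon A\to B$ between subsets of $X$ with $\sup_{x\in A}d(x,f(x))<\infty$. $X$ is amenable if there is a nonzero finitely additive $\mu\colon\mathcal{P}(X)\to[0,\infty)$ with $\mu(A)=\mu(B)$ whenever there is a partial translation $f\colon A\to B$. *)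

theory Defs
  imports "HOL-Analysis.Analysis"
begin

typedef 'a ell2 = "{f :: 'a \<Rightarrow> complex. (\<lambda>x. (cmod (f x))\<^sup>2) summable_on UNIV}"
  morphisms Rep_ell2 Abs_ell2
  by (rule exI[of _ "\<lambda>_. 0"]) simp

definition fnorm2 :: "('a \<Rightarrow> complex) \<Rightarrow> real" where
  "fnorm2 f = sqrt (infsum (\<lambda>x. (cmod (f x))\<^sup>2) UNIV)"

definition ell2_norm :: "'a ell2 \<Rightarrow> real" where
  "ell2_norm f = fnorm2 (Rep_ell2 f)"

definition ell2_inner :: "'a ell2 \<Rightarrow> 'a ell2 \<Rightarrow> complex" where
  "ell2_inner f g = infsum (\<lambda>x. cnj (Rep_ell2 f x) * Rep_ell2 g x) UNIV"

definition delta :: "'a \<Rightarrow> 'a ell2" where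
  "delta y = Abs_ell2 (\<lambda>x. if x = y then 1 else 0)"

type_synonym 'a op = "'a ell2 \<Rightarrow> 'a ell2"

definition bounded_op :: "'a op \<Rightarrow> bool" where
  "bounded_op T \<longleftrightarrow>
     (\<forall>f g h c e. (\<forall>x. Rep_ell2 h x = c * Rep_ell2 f x + e * Rep_ell2 g x) \<longrightarrow>
        (\<forall>x. Rep_ell2 (T h) x = c * Rep_ell2 (T f) x + e * Rep_ell2 (T g) x)) \<and>
     (\<exists>C. \<forall>f. ell2_norm (T f) \<le> C * ell2_norm f)"

text \<open>Operator norm of a pointwise combination of operators, given as a map
  from vectors to functions X -> complex.\<close>
definition comb_norm :: "('a ell2 \<Rightarrow> 'a \<Rightarrow> complex) \<Rightarrow> real" where
  "comb_norm G = Sup {fnorm2 (G f) | f. ell2_norm f \<le> 1}"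

definition op_dist :: "'a op \<Rightarrow> 'a op \<Rightarrow> real" where
  "op_dist T S = comb_norm (\<lambda>f x. Rep_ell2 (T f) x - Rep_ell2 (S f) x)"

definition op_add :: "'a op \<Rightarrow> 'a op \<Rightarrow> 'a op" where
  "op_add T S = (\<lambda>f. Abs_ell2 (\<lambda>x. Rep_ell2 (T f) x + Rep_ell2 (S f) x))"

definition op_scale :: "complex \<Rightarrow> 'a op \<Rightarrow> 'a op" where
  "op_scale c T = (\<lambda>f. Abs_ell2 (\<lambda>x. c * Rep_ell2 (T f) x))"

definition mult_op :: "('a \<Rightarrow> complex) \<Rightarrow> 'a op" where
  "mult_op m = (\<lambda>f. Abs_ell2 (\<lambda>x. m x * Rep_ell2 f x))"

definition positive_op :: "'a op \<Rightarrow> bool" where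
  "positive_op T \<longleftrightarrow> (\<forall>f. ell2_inner f (T f) \<in> \<real> \<and> 0 \<le> Re (ell2_inner f (T f)))"

definition finite_propagation :: "'a::metric_space op \<Rightarrow> bool" where
  "finite_propagation T \<longleftrightarrow>
     (\<exists>R. \<forall>x y. Rep_ell2 (T (delta y)) x \<noteq> 0 \<longrightarrow> dist x y \<le> R)"

definition uniform_roe :: "('a::metric_space) op set" where
  "uniform_roe = {T. bounded_op T \<and>
     (\<forall>\<epsilon>>0. \<exists>S. bounded_op S \<and> finite_propagation S \<and> op_dist T S < \<epsilon>)}"

definition sigma :: "('a \<Rightarrow> real) \<Rightarrow> real \<Rightarrow> 'a op \<Rightarrow> 'a op" where
  "sigma h t a = mult_op (\<lambda>x. exp (\<i> * of_real (t * h x))) \<circ> a \<circ>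
                 mult_op (\<lambda>x. exp (- \<i> * of_real (t * h x)))"

definition entire_op :: "(complex \<Rightarrow> ('a::metric_space) op) \<Rightarrow> bool" where
  "entire_op F \<longleftrightarrow> (\<forall>z. F z \<in> uniform_roe) \<and>
     (\<forall>z. \<exists>D. bounded_op D \<and>
        ((\<lambda>w. comb_norm (\<lambda>f x. (Rep_ell2 (F w f) x - Rep_ell2 (F z f) x) / (w - z)
                               - Rep_ell2 (D f) x)) \<longlongrightarrow> 0) (at z))"

text \<open>F is an entire extension of t |-> sigma_{h,t}(b); b is analytic iff such F exists,
  and then sigma_{h,z}(b) = F z.\<close>
definition analytic_ext :: "('a::metric_space \<Rightarrow> real) \<Rightarrow> 'a op \<Rightarrow> (complex \<Rightarrow> 'a op) \<Rightarrow> bool" where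
  "analytic_ext h b F \<longleftrightarrow> entire_op F \<and> (\<forall>t::real. F (of_real t) = sigma h t b)"

definition is_state :: "(('a::metric_space) op \<Rightarrow> complex) \<Rightarrow> bool" where
  "is_state \<phi> \<longleftrightarrow>
     (\<forall>a\<in>uniform_roe. \<forall>b\<in>uniform_roe. \<forall>c.
        \<phi> (op_add a (op_scale c b)) = \<phi> a + c * \<phi> b) \<and>
     (\<forall>a\<in>uniform_roe. positive_op a \<longrightarrow> \<phi> a \<in> \<real> \<and> 0 \<le> Re (\<phi> a)) \<and>
     \<phi> id = 1"

definition kms_state :: "('a::metric_space \<Rightarrow> real) \<Rightarrow> real \<Rightarrow> ('a op \<Rightarrow> complex) \<Rightarrow> bool" where
  "kms_state h \<beta> \<phi> \<longleftrightarrow> is_state \<phi> \<and>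
     (\<forall>a\<in>uniform_roe. \<forall>b\<in>uniform_roe. \<forall>F. analytic_ext h b F \<longrightarrow>
        \<phi> (a \<circ> F (\<i> * of_real \<beta>)) = \<phi> (b \<circ> a))"

definition ulf :: "'a::metric_space itself \<Rightarrow> bool" where
  "ulf _ \<longleftrightarrow> (\<forall>r>0. \<exists>N::nat. \<forall>x::'a. finite (ball x r) \<and> card (ball x r) \<le> N)"

definition partial_translation :: "('a::metric_space \<Rightarrow> 'a) \<Rightarrow> 'a set \<Rightarrow> 'a set \<Rightarrow> bool" where
  "partial_translation f A B \<longleftrightarrow> bij_betw f A B \<and> (\<exists>R. \<forall>x\<in>A. dist x (f x) \<le> R)"

definition amenable :: "'a::metric_space itself \<Rightarrow> bool" where
  "amenable _ \<longleftrightarrow> (\<exists>\<mu> :: 'a set \<Rightarrow> real.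
     (\<forall>A. 0 \<le> \<mu> A) \<and> (\<exists>A. \<mu> A \<noteq> 0) \<and>
     (\<forall>A B. A \<inter> B = {} \<longrightarrow> \<mu> (A \<union> B) = \<mu> A + \<mu> B) \<and>
     (\<forall>f A B. partial_translation f A B \<longrightarrow> \<mu> A = \<mu> B))"

end

theory Submission
  imports Defs "HOL-Complex_Analysis.Conformal_Mappings"
begin


definition sq :: "('a \<Rightarrow> complex) \<Rightarrow> bool" where
  "sq f \<longleftrightarrow> (\<lambda>x. (cmod (f x))\<^sup>2) summable_on UNIV"

lemma sq_Rep[simp]: "sq (Rep_ell2 f)"
  using Rep_ell2[of f] by (simp add: sq_def)

lemma Rep_Abs: "sq f \<Longrightarrow> Rep_ell2 (Abs_ell2 f) = f"
  by (simp add: Abs_ell2_inverse sq_def)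

lemma sq_zero[simp]: "sq (\<lambda>x. 0)"
  by (simp add: sq_def)

lemma sq_mono:
  assumes "sq g" "\<And>x. cmod (f x) \<le> cmod (g x)"
  shows "sq f"
  unfolding sq_def
  by (rule summable_on_comparison_test[OF assms(1)[unfolded sq_def]])
     (auto intro: power_mono assms(2))

lemma sq_scale: "sq f \<Longrightarrow> sq (\<lambda>x. c * f x)"
  unfolding sq_def by (simp add: norm_mult power_mult_distrib summable_on_cmult_right)

lemma sq_bmult:
  assumes "sq f" "\<And>x. cmod (m x) \<le> M"
  shows "sq (\<lambda>x. m x * f x)"
proof -
  have "sq (\<lambda>x. of_real M * f x)" using sq_scale[OF assms(1)] .
  then show ?thesis
  proof (rule sq_mono)
    fix x
    have "cmod (m x * f x) = cmod (m x) * cmod (f x)" by (simp add: norm_mult)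
    also have "\<dots> \<le> M * cmod (f x)" by (rule mult_right_mono[OF assms(2)]) simp
    also have "\<dots> \<le> cmod (of_real M * f x)" by (simp add: norm_mult mult_right_mono)
    finally show "cmod (m x * f x) \<le> cmod (complex_of_real M * f x)" .
  qed
qed

lemma sq_add:
  assumes "sq f" "sq g"
  shows "sq (\<lambda>x. f x + g x)"
proof -
  have s: "(\<lambda>x. 2 * (cmod (f x))\<^sup>2 + 2 * (cmod (g x))\<^sup>2) summable_on UNIV"
    using assms unfolding sq_def
    by (intro summable_on_add summable_on_cmult_right) auto
  show ?thesis unfolding sq_def
  proof (rule summable_on_comparison_test[OF s])
    fix x
    have "cmod (f x + g x) \<le> cmod (f x) + cmod (g x)" by (rule norm_triangle_ineq)
    hence "(cmod (f x + g x))\<^sup>2 \<le> (cmod (f x) + cmod (g x))\<^sup>2" by (simp add: power_mono)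
    also have "\<dots> \<le> 2 * (cmod (f x))\<^sup>2 + 2 * (cmod (g x))\<^sup>2"
      by (smt (verit) sum_squares_bound power2_sum)
    finally show "(cmod (f x + g x))\<^sup>2 \<le> 2 * (cmod (f x))\<^sup>2 + 2 * (cmod (g x))\<^sup>2" .
  qed auto
qed

lemma sq_diff:
  assumes "sq f" "sq g"
  shows "sq (\<lambda>x. f x - g x)"
  using sq_add[OF assms(1) sq_scale[OF assms(2), of "-1"]] by simp

lemma sq_finite_support:
  assumes "finite S" "\<And>x. x \<notin> S \<Longrightarrow> f x = 0"
  shows "sq f"
proof -
  have "(\<lambda>x. (cmod (f x))\<^sup>2) summable_on S" using assms(1) by simp
  then show ?thesis unfolding sq_def
    by (rule summable_on_cong_neutral[THEN iffD1, rotated -1]) (use assms(2) in auto)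
qed

lemma sq_delta[simp]: "sq (\<lambda>x. if x = y then c else 0)"
  by (rule sq_finite_support[of "{y}"]) auto

lemma Rep_delta: "Rep_ell2 (delta y) x = (if x = y then 1 else 0)"
  unfolding delta_def by (subst Rep_Abs) auto

lemma fnorm2_nonneg: "fnorm2 f \<ge> 0"
proof -
  have "0 \<le> infsum (\<lambda>x. (cmod (f x))\<^sup>2) UNIV" by (rule infsum_nonneg) simp
  thus ?thesis unfolding fnorm2_def by simp
qed

lemma fnorm2_sq: "(fnorm2 f)\<^sup>2 = infsum (\<lambda>x. (cmod (f x))\<^sup>2) UNIV"
proof -
  have "0 \<le> infsum (\<lambda>x. (cmod (f x))\<^sup>2) UNIV" by (rule infsum_nonneg) simp
  thus ?thesis unfolding fnorm2_def by simp
qed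

lemma fnorm2_coord:
  assumes "sq f"
  shows "cmod (f x) \<le> fnorm2 f"
proof -
  have "(\<Sum>y\<in>{x}. (cmod (f y))\<^sup>2) \<le> infsum (\<lambda>x. (cmod (f x))\<^sup>2) UNIV"
    using assms unfolding sq_def by (intro finite_sum_le_infsum) auto
  hence "(cmod (f x))\<^sup>2 \<le> (fnorm2 f)\<^sup>2" by (simp add: fnorm2_sq)
  thus ?thesis using fnorm2_nonneg[of f] by (simp add: power2_le_iff_abs_le)
qed

lemma fnorm2_mono:
  assumes "sq g" "\<And>x. cmod (f x) \<le> cmod (g x)"
  shows "fnorm2 f \<le> fnorm2 g"
proof -
  have "sq f" using sq_mono assms by blast
  hence "infsum (\<lambda>x. (cmod (f x))\<^sup>2) UNIV \<le> infsum (\<lambda>x. (cmod (g x))\<^sup>2) UNIV"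
    using assms unfolding sq_def by (intro infsum_mono) (auto intro: power_mono)
  thus ?thesis unfolding fnorm2_def by simp
qed

lemma fnorm2_scale:
  assumes "sq f"
  shows "fnorm2 (\<lambda>x. c * f x) = cmod c * fnorm2 f"
proof -
  have "infsum (\<lambda>x. (cmod (c * f x))\<^sup>2) UNIV = (cmod c)\<^sup>2 * infsum (\<lambda>x. (cmod (f x))\<^sup>2) UNIV"
    by (simp add: norm_mult power_mult_distrib infsum_cmult_right')
  thus ?thesis unfolding fnorm2_def by (simp add: real_sqrt_mult)
qed

lemma fnorm2_zero[simp]: "fnorm2 (\<lambda>x. 0) = 0"
  unfolding fnorm2_def by simp

lemma fnorm2_finite_le:
  assumes "sq f" "finite F"
  shows "L2_set (\<lambda>x. cmod (f x)) F \<le> fnorm2 f"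
proof -
  have "(\<Sum>x\<in>F. (cmod (f x))\<^sup>2) \<le> infsum (\<lambda>x. (cmod (f x))\<^sup>2) UNIV"
    using assms unfolding sq_def by (intro finite_sum_le_infsum) auto
  thus ?thesis unfolding L2_set_def fnorm2_def by simp
qed

lemma fnorm2_triangle:
  assumes "sq f" "sq g"
  shows "fnorm2 (\<lambda>x. f x + g x) \<le> fnorm2 f + fnorm2 g"
proof -
  have "infsum (\<lambda>x. (cmod (f x + g x))\<^sup>2) UNIV \<le> (fnorm2 f + fnorm2 g)\<^sup>2"
  proof (rule infsum_le_finite_sums)
    show "(\<lambda>x. (cmod (f x + g x))\<^sup>2) summable_on UNIV" using sq_add[OF assms] by (simp add: sq_def)
  next
    fix F :: "'a set" assume F: "finite F"
    have "L2_set (\<lambda>x. cmod (f x + g x)) F \<le> L2_set (\<lambda>x. cmod (f x) + cmod (g x)) F"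
      by (rule L2_set_mono) (auto intro: norm_triangle_ineq)
    also have "\<dots> \<le> L2_set (\<lambda>x. cmod (f x)) F + L2_set (\<lambda>x. cmod (g x)) F"
      by (rule L2_set_triangle_ineq)
    also have "\<dots> \<le> fnorm2 f + fnorm2 g"
      using fnorm2_finite_le[OF assms(1) F] fnorm2_finite_le[OF assms(2) F] by simp
    finally have "sqrt (\<Sum>x\<in>F. (cmod (f x + g x))\<^sup>2) \<le> fnorm2 f + fnorm2 g"
      unfolding L2_set_def by simp
    hence "(sqrt (\<Sum>x\<in>F. (cmod (f x + g x))\<^sup>2))\<^sup>2 \<le> (fnorm2 f + fnorm2 g)\<^sup>2"
      by (rule power_mono) (simp add: sum_nonneg)
    thus "(\<Sum>x\<in>F. (cmod (f x + g x))\<^sup>2) \<le> (fnorm2 f + fnorm2 g)\<^sup>2"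
      by (simp add: sum_nonneg)
  qed
  moreover have "0 \<le> fnorm2 f + fnorm2 g" using fnorm2_nonneg[of f] fnorm2_nonneg[of g] by simp
  ultimately have "sqrt (infsum (\<lambda>x. (cmod (f x + g x))\<^sup>2) UNIV) \<le> fnorm2 f + fnorm2 g"
    by (intro real_le_lsqrt)
  thus ?thesis unfolding fnorm2_def[of "\<lambda>x. f x + g x"] .
qed

lemma fnorm2_diff_triangle:
  assumes "sq f" "sq g"
  shows "fnorm2 (\<lambda>x. f x - g x) \<le> fnorm2 f + fnorm2 g"
  using fnorm2_triangle[OF assms(1) sq_scale[OF assms(2), of "-1"]] fnorm2_scale[OF assms(2), of "-1"]
  by simp

lemma fnorm2_delta: "fnorm2 (\<lambda>x. if x = y then 1 else 0) = 1"
proof -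
  have "infsum (\<lambda>x. (cmod (if x = y then 1 else 0 :: complex))\<^sup>2) UNIV = (\<Sum>x\<in>{y}. (cmod (if x = y then 1 else 0 :: complex))\<^sup>2)"
    by (intro infsumI has_sum_finite_neutralI[of "{y}"]) auto
  thus ?thesis unfolding fnorm2_def by simp
qed

lemma ell2_norm_delta[simp]: "ell2_norm (delta y) = 1"
  unfolding ell2_norm_def using fnorm2_delta by (simp add: Rep_delta[abs_def])

lemma sq_tail:
  assumes "sq f" "e > 0"
  shows "\<exists>F. finite F \<and> fnorm2 (\<lambda>x. if x \<in> F then 0 else f x) \<le> e"
proof -
  let ?p = "\<lambda>x. (cmod (f x))\<^sup>2"
  have hs: "(?p has_sum infsum ?p UNIV) UNIV" using assms(1) unfolding sq_def by (rule has_sum_infsum)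
  obtain F where F: "finite F" "dist (sum ?p F) (infsum ?p UNIV) \<le> e\<^sup>2"
    using has_sum_finite_approximation[OF hs, of "e\<^sup>2"] assms(2) by auto
  have s1: "?p summable_on F" using F(1) by simp
  have s2: "?p summable_on (-F)" using assms(1) unfolding sq_def
    by (rule summable_on_subset) auto
  have "infsum ?p UNIV = infsum ?p (F \<union> -F)" by simp
  also have "\<dots> = infsum ?p F + infsum ?p (-F)"
    by (rule infsum_Un_disjoint[OF s1 s2]) auto
  finally have eq: "infsum ?p (-F) = infsum ?p UNIV - sum ?p F" using F(1) by simp
  have "infsum (\<lambda>x. (cmod (if x \<in> F then 0 else f x))\<^sup>2) UNIV = infsum ?p (-F)"
    by (subst infsum_cong_neutral[where T="-F"]) auto
  also have "\<dots> \<le> e\<^sup>2" using eq F(2) by (simp add: dist_real_def)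
  finally have "sqrt (infsum (\<lambda>x. (cmod (if x \<in> F then 0 else f x))\<^sup>2) UNIV) \<le> e"
    using assms(2) by (intro real_le_lsqrt) auto
  thus ?thesis using F(1) unfolding fnorm2_def by blast
qed


definition ent :: "'a op \<Rightarrow> 'a \<Rightarrow> 'a \<Rightarrow> complex" where
  "ent T x y = Rep_ell2 (T (delta y)) x"

lemma ell2_norm_eq: "ell2_norm f = fnorm2 (Rep_ell2 f)"
  by (simp add: ell2_norm_def)

lemma ell2_norm_nonneg: "ell2_norm f \<ge> 0"
  by (simp add: ell2_norm_def fnorm2_nonneg)

lemma coord_le: "cmod (Rep_ell2 f x) \<le> ell2_norm f"
  by (simp add: ell2_norm_def fnorm2_coord)

lemma bop_lin:
  assumes "bounded_op T" "\<And>x. Rep_ell2 h x = c * Rep_ell2 f x + e * Rep_ell2 g x"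
  shows "Rep_ell2 (T h) x = c * Rep_ell2 (T f) x + e * Rep_ell2 (T g) x"
  using assms unfolding bounded_op_def by blast

lemma bop_bound:
  assumes "bounded_op T"
  obtains C where "C \<ge> 0" "\<And>f. ell2_norm (T f) \<le> C * ell2_norm f"
proof -
  obtain C where C: "\<And>f. ell2_norm (T f) \<le> C * ell2_norm f" using assms unfolding bounded_op_def by blast
  have "ell2_norm (T f) \<le> max C 0 * ell2_norm f" for f
    using C[of f] ell2_norm_nonneg[of f] by (smt (verit) mult_right_mono)
  thus ?thesis using that[of "max C 0"] by simp
qed

lemma bop_zero:
  assumes "bounded_op T" "\<And>x. Rep_ell2 h x = 0"
  shows "Rep_ell2 (T h) x = 0"
  using bop_lin[OF assms(1), of h 0 h 0 h x] assms(2) by simp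

lemma bop_scale:
  assumes "bounded_op T" "\<And>x. Rep_ell2 h x = c * Rep_ell2 f x"
  shows "Rep_ell2 (T h) x = c * Rep_ell2 (T f) x"
  using bop_lin[OF assms(1), of h c f 0 f x] assms(2) by simp

lemma bop_add:
  assumes "bounded_op T" "\<And>x. Rep_ell2 h x = Rep_ell2 f x + Rep_ell2 g x"
  shows "Rep_ell2 (T h) x = Rep_ell2 (T f) x + Rep_ell2 (T g) x"
  using bop_lin[OF assms(1), of h 1 f 1 g x] assms(2) by simp

lemma bop_diff:
  assumes "bounded_op T" "\<And>x. Rep_ell2 h x = Rep_ell2 f x - Rep_ell2 g x"
  shows "Rep_ell2 (T h) x = Rep_ell2 (T f) x - Rep_ell2 (T g) x"
  using bop_lin[OF assms(1), of h 1 f "-1" g x] assms(2) by simp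

lemma bop_finite:
  assumes "bounded_op T" "finite S"
  shows "(\<forall>x. x \<notin> S \<longrightarrow> Rep_ell2 f x = 0) \<Longrightarrow> Rep_ell2 (T f) z = (\<Sum>y\<in>S. Rep_ell2 f y * ent T z y)"
  using assms(2)
proof (induction S arbitrary: f rule: finite_induct)
  case empty
  then show ?case using bop_zero[OF assms(1)] by simp
next
  case (insert a S f)
  define g where "g = Abs_ell2 (\<lambda>x. if x = a then 0 else Rep_ell2 f x)"
  have sqg: "sq (\<lambda>x. if x = a then 0 else Rep_ell2 f x)"
    by (rule sq_mono[OF sq_Rep[of f]]) auto
  have Rg: "Rep_ell2 g x = (if x = a then 0 else Rep_ell2 f x)" for x
    unfolding g_def using Rep_Abs[OF sqg] by simp
  have "\<forall>x. x \<notin> S \<longrightarrow> Rep_ell2 g x = 0" using insert.prems Rg by auto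
  hence IH: "Rep_ell2 (T g) z = (\<Sum>y\<in>S. Rep_ell2 g y * ent T z y)" using insert.IH by blast
  have "Rep_ell2 f x = 1 * Rep_ell2 g x + Rep_ell2 f a * Rep_ell2 (delta a) x" for x
    by (simp add: Rg Rep_delta)
  hence "Rep_ell2 (T f) z = 1 * Rep_ell2 (T g) z + Rep_ell2 f a * Rep_ell2 (T (delta a)) z"
    by (rule bop_lin[OF assms(1)])
  also have "\<dots> = (\<Sum>y\<in>S. Rep_ell2 f y * ent T z y) + Rep_ell2 f a * ent T z a"
    using IH insert.hyps(2) by (simp add: Rg ent_def cong: sum.cong) (intro sum.cong, auto)
  finally show ?case using insert.hyps by (simp add: add.commute)
qed

lemma eps_zero:
  fixes d :: complex
  assumes "K \<ge> 0" "\<And>e. e > 0 \<Longrightarrow> cmod d \<le> K * e"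
  shows "d = 0"
proof -
  have "cmod d \<le> 0 + e" if e: "e > 0" for e
  proof -
    have "cmod d \<le> K * (e / (K + 1))" using assms(2)[of "e / (K + 1)"] e assms(1) by simp
    also have "\<dots> \<le> e" using e assms(1) by (simp add: field_simps)
    finally show ?thesis by simp
  qed
  hence "cmod d \<le> 0" by (rule field_le_epsilon)
  thus ?thesis by simp
qed

lemma bop_ext:
  assumes T: "bounded_op T" and S: "bounded_op S" and eq: "\<And>x y. ent T x y = ent S x y"
  shows "T = S"
proof
  fix f
  obtain CT where CT: "CT \<ge> 0" "\<And>f. ell2_norm (T f) \<le> CT * ell2_norm f" using bop_bound[OF T] by blast
  obtain CS where CS: "CS \<ge> 0" "\<And>f. ell2_norm (S f) \<le> CS * ell2_norm f" using bop_bound[OF S] by blast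
  have "Rep_ell2 (T f) x = Rep_ell2 (S f) x" for x
  proof -
    have "cmod (Rep_ell2 (T f) x - Rep_ell2 (S f) x) \<le> (CT + CS) * e" if e: "e > 0" for e
    proof -
      obtain F where F: "finite F" "fnorm2 (\<lambda>x. if x \<in> F then 0 else Rep_ell2 f x) \<le> e"
        using sq_tail[OF sq_Rep e] by blast
      define g where "g = Abs_ell2 (\<lambda>x. if x \<in> F then Rep_ell2 f x else 0)"
      define t where "t = Abs_ell2 (\<lambda>x. if x \<in> F then 0 else Rep_ell2 f x)"
      have sqg: "sq (\<lambda>x. if x \<in> F then Rep_ell2 f x else 0)" by (rule sq_mono[OF sq_Rep[of f]]) auto
      have sqt: "sq (\<lambda>x. if x \<in> F then 0 else Rep_ell2 f x)" by (rule sq_mono[OF sq_Rep[of f]]) auto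
      have Rg: "Rep_ell2 g = (\<lambda>x. if x \<in> F then Rep_ell2 f x else 0)" unfolding g_def using Rep_Abs[OF sqg] .
      have Rt: "Rep_ell2 t = (\<lambda>x. if x \<in> F then 0 else Rep_ell2 f x)" unfolding t_def using Rep_Abs[OF sqt] .
      have dec: "\<And>x. Rep_ell2 f x = Rep_ell2 g x + Rep_ell2 t x" by (simp add: Rg Rt)
      have nt: "ell2_norm t \<le> e" using F(2) by (simp add: ell2_norm_def Rt)
      have gT: "Rep_ell2 (T g) x = (\<Sum>y\<in>F. Rep_ell2 g y * ent T x y)"
        by (rule bop_finite[OF T F(1)]) (simp add: Rg)
      have gS: "Rep_ell2 (S g) x = (\<Sum>y\<in>F. Rep_ell2 g y * ent S x y)"
        by (rule bop_finite[OF S F(1)]) (simp add: Rg)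
      have "Rep_ell2 (T f) x - Rep_ell2 (S f) x = Rep_ell2 (T t) x - Rep_ell2 (S t) x"
        using bop_add[OF T dec, of x] bop_add[OF S dec, of x] gT gS eq by simp
      also have "cmod \<dots> \<le> cmod (Rep_ell2 (T t) x) + cmod (Rep_ell2 (S t) x)" by (rule norm_triangle_ineq4)
      also have "\<dots> \<le> CT * ell2_norm t + CS * ell2_norm t"
        using coord_le[of "T t" x] coord_le[of "S t" x] CT(2)[of t] CS(2)[of t] by simp
      also have "\<dots> \<le> (CT + CS) * e" using nt CT(1) CS(1) by (simp add: distrib_right mult_left_mono add_mono)
      finally show ?thesis .
    qed
    hence "Rep_ell2 (T f) x - Rep_ell2 (S f) x = 0" using CT(1) CS(1) by (intro eps_zero[of "CT + CS"]) auto
    thus ?thesis by simp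
  qed
  thus "T f = S f" using Rep_ell2_inject by blast
qed

lemma cn_upper:
  assumes "\<And>f. ell2_norm f \<le> 1 \<Longrightarrow> fnorm2 (G f) \<le> B"
  shows "comb_norm G \<le> B"
  unfolding comb_norm_def
proof (rule cSup_least)
  have "fnorm2 (G (delta undefined)) \<in> {fnorm2 (G f) |f. ell2_norm f \<le> 1}"
    using ell2_norm_delta by fastforce
  thus "{fnorm2 (G f) |f. ell2_norm f \<le> 1} \<noteq> {}" by blast
next
  fix y assume "y \<in> {fnorm2 (G f) |f. ell2_norm f \<le> 1}"
  then show "y \<le> B" using assms by blast
qed

lemma cn_ge:
  assumes "\<And>f. ell2_norm f \<le> 1 \<Longrightarrow> fnorm2 (G f) \<le> B" "ell2_norm f \<le> 1"
  shows "fnorm2 (G f) \<le> comb_norm G"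
  unfolding comb_norm_def
proof (rule cSup_upper)
  show "fnorm2 (G f) \<in> {fnorm2 (G f) |f. ell2_norm f \<le> 1}" using assms(2) by blast
  show "bdd_above {fnorm2 (G f) |f. ell2_norm f \<le> 1}" unfolding bdd_above_def using assms(1) by blast
qed

lemma cn_nonneg:
  assumes "\<And>f. ell2_norm f \<le> 1 \<Longrightarrow> fnorm2 (G f) \<le> B"
  shows "0 \<le> comb_norm G"
proof -
  have "fnorm2 (G (delta undefined)) \<le> comb_norm G" by (rule cn_ge[of G B]) (simp_all add: assms)
  thus ?thesis using fnorm2_nonneg[of "G (delta undefined)"] by linarith
qed

lemma bop_diff_bound:
  assumes T: "bounded_op T" and S: "bounded_op S"
  obtains B where "\<And>f. ell2_norm f \<le> 1 \<Longrightarrow> fnorm2 (\<lambda>x. Rep_ell2 (T f) x - Rep_ell2 (S f) x) \<le> B"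
proof -
  obtain CT where CT: "CT \<ge> 0" "\<And>f. ell2_norm (T f) \<le> CT * ell2_norm f" using bop_bound[OF T] by blast
  obtain CS where CS: "CS \<ge> 0" "\<And>f. ell2_norm (S f) \<le> CS * ell2_norm f" using bop_bound[OF S] by blast
  have "fnorm2 (\<lambda>x. Rep_ell2 (T f) x - Rep_ell2 (S f) x) \<le> CT + CS" if "ell2_norm f \<le> 1" for f
  proof -
    have "fnorm2 (\<lambda>x. Rep_ell2 (T f) x - Rep_ell2 (S f) x) \<le> ell2_norm (T f) + ell2_norm (S f)"
      unfolding ell2_norm_def by (rule fnorm2_diff_triangle) simp_all
    also have "\<dots> \<le> CT * ell2_norm f + CS * ell2_norm f" using CT(2)[of f] CS(2)[of f] by simp
    also have "\<dots> \<le> CT + CS" using that CT(1) CS(1)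
      by (intro add_mono) (auto intro: mult_left_le)
    finally show ?thesis .
  qed
  thus ?thesis using that by blast
qed

lemma od_le:
  assumes "bounded_op T" "bounded_op S" "ell2_norm f \<le> 1"
  shows "fnorm2 (\<lambda>x. Rep_ell2 (T f) x - Rep_ell2 (S f) x) \<le> op_dist T S"
proof -
  obtain B where "\<And>f. ell2_norm f \<le> 1 \<Longrightarrow> fnorm2 (\<lambda>x. Rep_ell2 (T f) x - Rep_ell2 (S f) x) \<le> B"
    using bop_diff_bound[OF assms(1,2)] by blast
  thus ?thesis unfolding op_dist_def using cn_ge[where G="\<lambda>f x. Rep_ell2 (T f) x - Rep_ell2 (S f) x"] assms(3) by blast
qed

lemma od_nonneg:
  assumes "bounded_op T" "bounded_op S"
  shows "0 \<le> op_dist T S"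
proof -
  have "fnorm2 (\<lambda>x. Rep_ell2 (T (delta undefined)) x - Rep_ell2 (S (delta undefined)) x) \<le> op_dist T S"
    by (rule od_le[OF assms]) simp
  thus ?thesis using fnorm2_nonneg[of "\<lambda>x. Rep_ell2 (T (delta undefined)) x - Rep_ell2 (S (delta undefined)) x"] by linarith
qed

lemma fnorm2_zero_iff:
  assumes "sq f" "fnorm2 f = 0"
  shows "f x = 0"
  using fnorm2_coord[OF assms(1), of x] assms(2) by simp

lemma od_scaled:
  assumes T: "bounded_op T" and S: "bounded_op S"
  shows "fnorm2 (\<lambda>x. Rep_ell2 (T f) x - Rep_ell2 (S f) x) \<le> op_dist T S * ell2_norm f"
proof (cases "ell2_norm f = 0")
  case True
  hence z: "Rep_ell2 f x = 0" for x using fnorm2_zero_iff[of "Rep_ell2 f"] by (simp add: ell2_norm_def)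
  have "Rep_ell2 (T f) x = 0" "Rep_ell2 (S f) x = 0" for x
    using bop_zero[OF T z] bop_zero[OF S z] by auto
  thus ?thesis using True by simp
next
  case False
  define n where "n = ell2_norm f"
  have n: "n > 0" using False ell2_norm_nonneg[of f] n_def by simp
  define f' where "f' = Abs_ell2 (\<lambda>x. complex_of_real (1/n) * Rep_ell2 f x)"
  have Rf': "Rep_ell2 f' = (\<lambda>x. complex_of_real (1/n) * Rep_ell2 f x)"
    unfolding f'_def by (rule Rep_Abs[OF sq_scale[OF sq_Rep]])
  have "ell2_norm f' = cmod (complex_of_real (1/n)) * fnorm2 (Rep_ell2 f)"
    unfolding ell2_norm_def Rf' by (rule fnorm2_scale) simp
  hence nf': "ell2_norm f' = 1"
    using n by (simp add: ell2_norm_def n_def norm_divide)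
  have fx: "Rep_ell2 f x = complex_of_real n * Rep_ell2 f' x" for x using n by (simp add: Rf')
  have "(\<lambda>x. Rep_ell2 (T f) x - Rep_ell2 (S f) x) = (\<lambda>x. complex_of_real n * (Rep_ell2 (T f') x - Rep_ell2 (S f') x))"
    using bop_scale[OF T fx] bop_scale[OF S fx] by (auto simp: algebra_simps)
  hence "fnorm2 (\<lambda>x. Rep_ell2 (T f) x - Rep_ell2 (S f) x) = n * fnorm2 (\<lambda>x. Rep_ell2 (T f') x - Rep_ell2 (S f') x)"
    using n by (simp add: fnorm2_scale sq_diff)
  also have "\<dots> \<le> n * op_dist T S" using od_le[OF T S, of f'] nf' n by simp
  finally show ?thesis by (simp add: n_def mult.commute)
qed

lemma od_upper:
  assumes "\<And>f. ell2_norm f \<le> 1 \<Longrightarrow> fnorm2 (\<lambda>x. Rep_ell2 (T f) x - Rep_ell2 (S f) x) \<le> B"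
  shows "op_dist T S \<le> B"
  unfolding op_dist_def by (rule cn_upper) (simp add: assms)

lemma op_dist_self: "op_dist T T = 0"
proof -
  have "op_dist T T \<le> 0" unfolding op_dist_def by (rule cn_upper) simp
  moreover have "0 \<le> op_dist T T" unfolding op_dist_def by (rule cn_nonneg[of _ 0]) simp
  ultimately show ?thesis by simp
qed


lemma sq_reindex:
  assumes inj: "inj_on p B" and f: "sq f"
  shows "sq (\<lambda>y. if y \<in> B then f (p y) else 0)"
    and "fnorm2 (\<lambda>y. if y \<in> B then f (p y) else 0) \<le> fnorm2 f"
proof -
  define q where "q = (\<lambda>x. (cmod (f x))\<^sup>2)"
  have qU: "q summable_on UNIV" using f unfolding sq_def q_def .
  have qpB: "q summable_on (p ` B)" by (rule summable_on_subset[OF qU]) simp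
  have qp: "(q \<circ> p) summable_on B" using summable_on_reindex[OF inj] qpB by blast
  have eqf: "(\<lambda>y. (cmod (if y \<in> B then f (p y) else 0))\<^sup>2) summable_on UNIV \<longleftrightarrow> (q \<circ> p) summable_on B"
    by (rule summable_on_cong_neutral) (auto simp: q_def)
  show "sq (\<lambda>y. if y \<in> B then f (p y) else 0)" unfolding sq_def using eqf qp by blast
  have "infsum (\<lambda>y. (cmod (if y \<in> B then f (p y) else 0))\<^sup>2) UNIV = infsum (q \<circ> p) B"
    by (rule infsum_cong_neutral) (auto simp: q_def)
  also have "\<dots> = infsum q (p ` B)" by (rule infsum_reindex[OF inj, symmetric])
  also have "\<dots> \<le> infsum q UNIV"
    by (rule infsum_mono2[OF qpB qU]) (auto simp: q_def)
  finally show "fnorm2 (\<lambda>y. if y \<in> B then f (p y) else 0) \<le> fnorm2 f"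
    unfolding fnorm2_def q_def by simp
qed

lemma fnorm2_bmult:
  assumes "sq u" "\<And>x. cmod (m x) \<le> M"
  shows "fnorm2 (\<lambda>x. m x * u x) \<le> M * fnorm2 u"
proof -
  have M: "M \<ge> 0" using assms(2)[of undefined] norm_ge_zero order_trans by blast
  have "fnorm2 (\<lambda>x. m x * u x) \<le> fnorm2 (\<lambda>x. complex_of_real M * u x)"
  proof (rule fnorm2_mono)
    show "sq (\<lambda>x. complex_of_real M * u x)" by (rule sq_scale[OF assms(1)])
    fix x show "cmod (m x * u x) \<le> cmod (complex_of_real M * u x)"
      using assms(2)[of x] M by (simp add: norm_mult mult_right_mono)
  qed
  also have "\<dots> = M * fnorm2 u" using fnorm2_scale[OF assms(1)] M by simp
  finally show ?thesis .
qed

definition Pop :: "('a \<Rightarrow> 'a) \<Rightarrow> 'a set \<Rightarrow> ('a \<Rightarrow> complex) \<Rightarrow> 'a op" where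
  "Pop p B m = (\<lambda>f. Abs_ell2 (\<lambda>y. if y \<in> B then m y * Rep_ell2 f (p y) else 0))"

lemma Pop_sq:
  assumes "inj_on p B" "\<And>x. cmod (m x) \<le> M" "sq f"
  shows "sq (\<lambda>y. if y \<in> B then m y * f (p y) else 0)"
proof -
  have "sq (\<lambda>y. m y * (if y \<in> B then f (p y) else 0))"
    by (rule sq_bmult[OF sq_reindex(1)[OF assms(1,3)] assms(2)])
  moreover have "(\<lambda>y. m y * (if y \<in> B then f (p y) else 0)) = (\<lambda>y. if y \<in> B then m y * f (p y) else 0)"
    by auto
  ultimately show ?thesis by simp
qed

lemma Rep_Pop:
  assumes "inj_on p B" "\<And>x. cmod (m x) \<le> M"
  shows "Rep_ell2 (Pop p B m f) y = (if y \<in> B then m y * Rep_ell2 f (p y) else 0)"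
  unfolding Pop_def using Rep_Abs[OF Pop_sq[OF assms sq_Rep[of f]]] by simp

lemma Pop_norm:
  assumes "inj_on p B" "\<And>x. cmod (m x) \<le> M"
  shows "ell2_norm (Pop p B m f) \<le> M * ell2_norm f"
proof -
  have M: "M \<ge> 0" using assms(2)[of undefined] norm_ge_zero order_trans by blast
  have "Rep_ell2 (Pop p B m f) = (\<lambda>y. m y * (if y \<in> B then Rep_ell2 f (p y) else 0))"
    using Rep_Pop[OF assms] by auto
  hence "ell2_norm (Pop p B m f) \<le> M * fnorm2 (\<lambda>y. if y \<in> B then Rep_ell2 f (p y) else 0)"
    unfolding ell2_norm_def by (simp add: fnorm2_bmult[OF sq_reindex(1)[OF assms(1) sq_Rep] assms(2)])
  also have "\<dots> \<le> M * ell2_norm f" unfolding ell2_norm_def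
    by (rule mult_left_mono[OF sq_reindex(2)[OF assms(1) sq_Rep] M])
  finally show ?thesis .
qed

lemma Pop_bop:
  assumes "inj_on p B" "\<And>x. cmod (m x) \<le> M"
  shows "bounded_op (Pop p B m)"
  unfolding bounded_op_def
proof (intro conjI allI impI)
  fix f g h :: "'a ell2" and c e :: complex and x
  assume lin: "\<forall>x. Rep_ell2 h x = c * Rep_ell2 f x + e * Rep_ell2 g x"
  show "Rep_ell2 (Pop p B m h) x = c * Rep_ell2 (Pop p B m f) x + e * Rep_ell2 (Pop p B m g) x"
    using lin by (simp add: Rep_Pop[OF assms] algebra_simps)
next
  show "\<exists>C. \<forall>f. ell2_norm (Pop p B m f) \<le> C * ell2_norm f"
    using Pop_norm[of p B m M] assms by blast
qed

lemma Pop_fp: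
  assumes "inj_on p B" "\<And>x. cmod (m x) \<le> M" "\<And>y. y \<in> B \<Longrightarrow> dist y (p y) \<le> R"
  shows "finite_propagation (Pop p B m)"
  unfolding finite_propagation_def
proof (intro exI allI impI)
  fix x y assume "Rep_ell2 (Pop p B m (delta y)) x \<noteq> 0"
  hence "x \<in> B" "p x = y" by (auto simp: Rep_Pop[OF assms(1,2)] Rep_delta split: if_splits)
  thus "dist x y \<le> R" using assms(3) by auto
qed

lemma mult_op_Pop: "mult_op m = Pop id UNIV m"
  unfolding mult_op_def Pop_def by simp

lemma id_Pop: "(id :: 'a op) = Pop id UNIV (\<lambda>_. 1)"
  unfolding Pop_def by (simp add: Rep_ell2_inverse id_def)

lemma mult_bop: "(\<And>x. cmod (m x) \<le> M) \<Longrightarrow> bounded_op (mult_op m)"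
  unfolding mult_op_Pop by (rule Pop_bop) auto

lemma Rep_mult: "(\<And>x. cmod (m x) \<le> M) \<Longrightarrow> Rep_ell2 (mult_op m f) y = m y * Rep_ell2 f y"
  unfolding mult_op_Pop by (subst Rep_Pop) auto

lemma mult_norm: "(\<And>x. cmod (m x) \<le> M) \<Longrightarrow> ell2_norm (mult_op m f) \<le> M * ell2_norm f"
  unfolding mult_op_Pop using Pop_norm[of id UNIV m M f] by simp

lemma comp_bop:
  assumes T: "bounded_op T" and S: "bounded_op S"
  shows "bounded_op (T \<circ> S)"
  unfolding bounded_op_def
proof (intro conjI allI impI)
  fix f g h :: "'a ell2" and c e :: complex and x
  assume lin: "\<forall>x. Rep_ell2 h x = c * Rep_ell2 f x + e * Rep_ell2 g x"
  have "\<And>x. Rep_ell2 (S h) x = c * Rep_ell2 (S f) x + e * Rep_ell2 (S g) x"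
    using bop_lin[OF S] lin by blast
  thus "Rep_ell2 ((T \<circ> S) h) x = c * Rep_ell2 ((T \<circ> S) f) x + e * Rep_ell2 ((T \<circ> S) g) x"
    using bop_lin[OF T] by simp
next
  obtain CT where CT: "CT \<ge> 0" "\<And>f. ell2_norm (T f) \<le> CT * ell2_norm f" using bop_bound[OF T] by blast
  obtain CS where CS: "CS \<ge> 0" "\<And>f. ell2_norm (S f) \<le> CS * ell2_norm f" using bop_bound[OF S] by blast
  have "ell2_norm (T (S f)) \<le> (CT * CS) * ell2_norm f" for f
  proof -
    have "ell2_norm (T (S f)) \<le> CT * ell2_norm (S f)" by (rule CT(2))
    also have "\<dots> \<le> CT * (CS * ell2_norm f)" by (rule mult_left_mono[OF CS(2) CT(1)])
    finally show ?thesis by simp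
  qed
  thus "\<exists>C. \<forall>f. ell2_norm ((T \<circ> S) f) \<le> C * ell2_norm f" by auto
qed

lemma roeI:
  assumes "bounded_op T" "finite_propagation T"
  shows "T \<in> uniform_roe"
  unfolding uniform_roe_def using assms by (auto intro!: exI[of _ T] simp: op_dist_self)

lemma roe_bop: "T \<in> uniform_roe \<Longrightarrow> bounded_op T"
  unfolding uniform_roe_def by blast

lemma roe_approx:
  assumes "T \<in> uniform_roe" "e > 0"
  obtains S where "bounded_op S" "finite_propagation S" "op_dist T S < e"
  using assms unfolding uniform_roe_def by blast

lemma roe_mult_left:
  assumes T: "T \<in> uniform_roe" and m: "\<And>x. cmod (m x) \<le> M"
  shows "mult_op m \<circ> T \<in> uniform_roe"
proof -
  have M: "M \<ge> 0" using m[of undefined] norm_ge_zero order_trans by blast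
  have bT: "bounded_op T" using T by (rule roe_bop)
  have bm: "bounded_op (mult_op m)" by (rule mult_bop[OF m])
  have "\<exists>S. bounded_op S \<and> finite_propagation S \<and> op_dist (mult_op m \<circ> T) S < e" if e: "e > 0" for e
  proof -
    obtain S where S: "bounded_op S" "finite_propagation S" "op_dist T S < e / (M + 1)"
      using roe_approx[OF T, of "e / (M + 1)"] e M by auto
    have bS: "bounded_op (mult_op m \<circ> S)" by (rule comp_bop[OF bm S(1)])
    have fS: "finite_propagation (mult_op m \<circ> S)"
      using S(2) unfolding finite_propagation_def by (auto simp: Rep_mult[OF m])
    have "op_dist (mult_op m \<circ> T) (mult_op m \<circ> S) \<le> M * op_dist T S"
    proof (rule od_upper)
      fix f :: "'a ell2" assume f: "ell2_norm f \<le> 1"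
      have "(\<lambda>x. Rep_ell2 ((mult_op m \<circ> T) f) x - Rep_ell2 ((mult_op m \<circ> S) f) x)
            = (\<lambda>x. m x * (Rep_ell2 (T f) x - Rep_ell2 (S f) x))"
        by (auto simp: Rep_mult[OF m] algebra_simps)
      hence "fnorm2 (\<lambda>x. Rep_ell2 ((mult_op m \<circ> T) f) x - Rep_ell2 ((mult_op m \<circ> S) f) x)
            \<le> M * fnorm2 (\<lambda>x. Rep_ell2 (T f) x - Rep_ell2 (S f) x)"
        using fnorm2_bmult[OF sq_diff[OF sq_Rep sq_Rep] m] by simp
      also have "\<dots> \<le> M * op_dist T S" by (rule mult_left_mono[OF od_le[OF bT S(1) f] M])
      finally show "fnorm2 (\<lambda>x. Rep_ell2 ((mult_op m \<circ> T) f) x - Rep_ell2 ((mult_op m \<circ> S) f) x) \<le> M * op_dist T S" .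
    qed
    also have "\<dots> \<le> M * (e / (M + 1))" using S(3) M by (intro mult_left_mono) auto
    also have "\<dots> < e" using e M by (simp add: field_simps)
    finally show ?thesis using bS fS by blast
  qed
  thus ?thesis unfolding uniform_roe_def using comp_bop[OF bm bT] by blast
qed


section \<open>Finitely additive measures and means\<close>

definition fam :: "('a set \<Rightarrow> real) \<Rightarrow> bool" where
  "fam \<mu> \<longleftrightarrow> (\<forall>A. 0 \<le> \<mu> A) \<and> (\<forall>A B. A \<inter> B = {} \<longrightarrow> \<mu> (A \<union> B) = \<mu> A + \<mu> B)"

lemma fam_nonneg: "fam \<mu> \<Longrightarrow> 0 \<le> \<mu> A"
  unfolding fam_def by blast

lemma fam_add: "fam \<mu> \<Longrightarrow> A \<inter> B = {} \<Longrightarrow> \<mu> (A \<union> B) = \<mu> A + \<mu> B"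
  unfolding fam_def by blast

lemma fam_empty: "fam \<mu> \<Longrightarrow> \<mu> {} = 0"
  using fam_add[of \<mu> "{}" "{}"] by simp

lemma fam_mono:
  assumes "fam \<mu>" "A \<subseteq> B"
  shows "\<mu> A \<le> \<mu> B"
proof -
  have "B = A \<union> (B - A)" using assms(2) by blast
  hence "\<mu> B = \<mu> A + \<mu> (B - A)" using fam_add[OF assms(1), of A "B - A"] by auto
  thus ?thesis using fam_nonneg[OF assms(1), of "B - A"] by simp
qed

lemma fam_sum:
  assumes "fam \<mu>" "finite P"
  shows "disjoint_family_on F P \<Longrightarrow> \<mu> (\<Union>p\<in>P. F p) = (\<Sum>p\<in>P. \<mu> (F p))"
  using assms(2)
proof (induction P rule: finite_induct)
  case empty
  then show ?case using fam_empty[OF assms(1)] by simp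
next
  case (insert a P)
  have d: "disjoint_family_on F P" using insert.prems disjoint_family_on_mono by blast
  have "F a \<inter> (\<Union>p\<in>P. F p) = {}"
    using insert.prems insert.hyps(2) unfolding disjoint_family_on_def by auto
  hence "\<mu> (\<Union>p\<in>insert a P. F p) = \<mu> (F a) + \<mu> (\<Union>p\<in>P. F p)"
    using fam_add[OF assms(1)] by simp
  thus ?case using insert.IH[OF d] insert.hyps by simp
qed

definition simple :: "('a \<Rightarrow> real) \<Rightarrow> bool" where
  "simple s \<longleftrightarrow> finite (range s)"

definition J :: "('a set \<Rightarrow> real) \<Rightarrow> ('a \<Rightarrow> real) \<Rightarrow> real" where
  "J \<mu> s = (\<Sum>v\<in>range s. v * \<mu> (s -` {v}))"

lemma J_factor:
  assumes mu: "fam \<mu>" and T: "finite T" "range g \<subseteq> T" and s: "simple s" and sg: "\<And>x. s x = \<phi> (g x)"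
  shows "J \<mu> s = (\<Sum>p\<in>T. \<phi> p * \<mu> (g -` {p}))"
proof -
  have fs: "finite (range s)" using s unfolding simple_def .
  define T' where "T' = {p \<in> T. \<phi> p \<in> range s}"
  have fT': "finite T'" using T(1) unfolding T'_def by simp
  have gT: "g x \<in> T" for x using T(2) by blast
  have pre: "s -` {v} = (\<Union>p\<in>{p \<in> T'. \<phi> p = v}. g -` {p})" if "v \<in> range s" for v
    using that gT sg unfolding T'_def by auto
  have disj: "disjoint_family_on (\<lambda>p. g -` {p}) Q" for Q
    unfolding disjoint_family_on_def by auto
  have "J \<mu> s = (\<Sum>v\<in>range s. v * (\<Sum>p\<in>{p \<in> T'. \<phi> p = v}. \<mu> (g -` {p})))"
    unfolding J_def
    by (intro sum.cong refl) (simp add: pre fam_sum[OF mu _ disj] fT')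
  also have "\<dots> = (\<Sum>v\<in>range s. (\<Sum>p\<in>{p \<in> T'. \<phi> p = v}. \<phi> p * \<mu> (g -` {p})))"
    by (intro sum.cong refl) (simp add: sum_distrib_left)
  also have "\<dots> = (\<Sum>p\<in>T'. \<phi> p * \<mu> (g -` {p}))"
    by (rule sum.group[OF fT' fs]) (auto simp: T'_def)
  also have "\<dots> = (\<Sum>p\<in>T. \<phi> p * \<mu> (g -` {p}))"
  proof (rule sum.mono_neutral_left[OF T(1)])
    show "T' \<subseteq> T" unfolding T'_def by blast
    show "\<forall>i\<in>T - T'. \<phi> i * \<mu> (g -` {i}) = 0"
    proof
      fix i assume "i \<in> T - T'"
      hence "g -` {i} = {}" unfolding T'_def using sg by auto
      thus "\<phi> i * \<mu> (g -` {i}) = 0" using fam_empty[OF mu] by simp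
    qed
  qed
  finally show ?thesis .
qed

lemma simple_image: "simple s \<Longrightarrow> simple (\<lambda>x. f (s x))"
  unfolding simple_def by (metis finite_imageI image_image)

lemma simple_pair:
  assumes "simple s" "simple t"
  shows "simple (\<lambda>x. f (s x) (t x))"
proof -
  have "range (\<lambda>x. f (s x) (t x)) \<subseteq> (\<lambda>p. f (fst p) (snd p)) ` (range s \<times> range t)"
  proof
    fix y assume "y \<in> range (\<lambda>x. f (s x) (t x))"
    then obtain x where "y = f (s x) (t x)" by blast
    thus "y \<in> (\<lambda>p. f (fst p) (snd p)) ` (range s \<times> range t)" by (intro image_eqI[of _ _ "(s x, t x)"]) auto
  qed
  moreover have "finite (range s \<times> range t)" using assms unfolding simple_def by simp
  ultimately show ?thesis unfolding simple_def by (meson finite_imageI finite_subset)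
qed

lemma simple_comp: "simple s \<Longrightarrow> simple (\<lambda>x. s (p x))"
  unfolding simple_def by (rule finite_subset[of _ "range s"]) auto

lemma simple_const[simp]: "simple (\<lambda>x. c)"
  unfolding simple_def by simp

lemma simple_restrict: "simple s \<Longrightarrow> simple (\<lambda>x. if x \<in> A then s x else 0)"
  unfolding simple_def by (rule finite_subset[of _ "insert 0 (range s)"]) auto

lemma J_pair:
  assumes mu: "fam \<mu>" and s: "simple s" and t: "simple t"
  shows "J \<mu> (\<lambda>x. f (s x) (t x)) = (\<Sum>p\<in>range s \<times> range t. f (fst p) (snd p) * \<mu> ((\<lambda>x. (s x, t x)) -` {p}))"
  by (rule J_factor[OF mu _ _ simple_pair[OF s t]]) (use s t in \<open>auto simp: simple_def\<close>)

lemma J_add: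
  assumes mu: "fam \<mu>" and s: "simple s" and t: "simple t"
  shows "J \<mu> (\<lambda>x. s x + t x) = J \<mu> s + J \<mu> t"
proof -
  have 1: "J \<mu> s = (\<Sum>p\<in>range s \<times> range t. fst p * \<mu> ((\<lambda>x. (s x, t x)) -` {p}))"
    using J_pair[OF mu s t, of "\<lambda>a b. a"] by simp
  have 2: "J \<mu> t = (\<Sum>p\<in>range s \<times> range t. snd p * \<mu> ((\<lambda>x. (s x, t x)) -` {p}))"
    using J_pair[OF mu s t, of "\<lambda>a b. b"] by simp
  have 3: "J \<mu> (\<lambda>x. s x + t x) = (\<Sum>p\<in>range s \<times> range t. (fst p + snd p) * \<mu> ((\<lambda>x. (s x, t x)) -` {p}))"
    by (rule J_pair[OF mu s t, of "\<lambda>a b. a + b"])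
  show ?thesis unfolding 1 2 3 by (simp add: distrib_right sum.distrib)
qed

lemma J_mono:
  assumes mu: "fam \<mu>" and s: "simple s" and t: "simple t" and le: "\<And>x. s x \<le> t x"
  shows "J \<mu> s \<le> J \<mu> t"
proof -
  have 1: "J \<mu> s = (\<Sum>p\<in>range s \<times> range t. fst p * \<mu> ((\<lambda>x. (s x, t x)) -` {p}))"
    using J_pair[OF mu s t, of "\<lambda>a b. a"] by simp
  have 2: "J \<mu> t = (\<Sum>p\<in>range s \<times> range t. snd p * \<mu> ((\<lambda>x. (s x, t x)) -` {p}))"
    using J_pair[OF mu s t, of "\<lambda>a b. b"] by simp
  show ?thesis unfolding 1 2
  proof (rule sum_mono)
    fix p assume "p \<in> range s \<times> range t"
    show "fst p * \<mu> ((\<lambda>x. (s x, t x)) -` {p}) \<le> snd p * \<mu> ((\<lambda>x. (s x, t x)) -` {p})"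
    proof (cases "(\<lambda>x. (s x, t x)) -` {p} = {}")
      case True then show ?thesis using fam_empty[OF mu] by simp
    next
      case False
      then obtain x where "(s x, t x) = p" by auto
      hence "fst p \<le> snd p" using le[of x] by auto
      thus ?thesis by (rule mult_right_mono[OF _ fam_nonneg[OF mu]])
    qed
  qed
qed

lemma J_const:
  assumes mu: "fam \<mu>"
  shows "J \<mu> (\<lambda>x. c) = c * \<mu> UNIV"
proof -
  have "J \<mu> (\<lambda>x. c) = (\<Sum>p\<in>(UNIV :: unit set). (\<lambda>_. c) p * \<mu> ((\<lambda>x. ()) -` {p}))"
    by (rule J_factor[OF mu]) auto
  thus ?thesis by simp
qed

lemma J_scale:
  assumes mu: "fam \<mu>" and s: "simple s"
  shows "J \<mu> (\<lambda>x. c * s x) = c * J \<mu> s"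
proof -
  have 1: "J \<mu> s = (\<Sum>p\<in>range s. p * \<mu> (s -` {p}))" unfolding J_def ..
  have "J \<mu> (\<lambda>x. c * s x) = (\<Sum>p\<in>range s. (c * p) * \<mu> (s -` {p}))"
    by (rule J_factor[OF mu _ _ simple_image[OF s]]) (use s in \<open>auto simp: simple_def\<close>)
  thus ?thesis unfolding 1 by (simp add: sum_distrib_left mult.assoc)
qed

lemma J_trans:
  assumes mu: "fam \<mu>" and s: "simple s"
    and inv: "\<And>A'. A' \<subseteq> A \<Longrightarrow> \<mu> A' = \<mu> (g ` A')"
    and gAB: "g ` A = B" and pB: "\<And>y. y \<in> B \<Longrightarrow> p y \<in> A \<and> g (p y) = y"
    and pA: "\<And>x. x \<in> A \<Longrightarrow> p (g x) = x"
  shows "J \<mu> (\<lambda>x. if x \<in> A then s x else 0) = J \<mu> (\<lambda>y. if y \<in> B then s (p y) else 0)"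
proof -
  have fs: "finite (range s)" using s unfolding simple_def .
  have 1: "J \<mu> (\<lambda>x. if x \<in> A then s x else 0)
      = (\<Sum>q\<in>(UNIV :: bool set) \<times> range s. (if fst q then snd q else 0) * \<mu> ((\<lambda>x. (x \<in> A, s x)) -` {q}))"
    by (rule J_factor[OF mu _ _ simple_restrict[OF s]]) (use fs in auto)
  have s2: "simple (\<lambda>y. if y \<in> B then s (p y) else 0)"
    by (rule simple_restrict[OF simple_comp[OF s]])
  have 2: "J \<mu> (\<lambda>y. if y \<in> B then s (p y) else 0)
      = (\<Sum>q\<in>(UNIV :: bool set) \<times> range s. (if fst q then snd q else 0) * \<mu> ((\<lambda>y. (y \<in> B, s (p y))) -` {q}))"
    by (rule J_factor[OF mu _ _ s2]) (use fs in auto)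
  show ?thesis unfolding 1 2
  proof (intro sum.cong refl)
    fix q :: "bool \<times> real"
    obtain b v where q: "q = (b, v)" by fastforce
    show "(if fst q then snd q else 0) * \<mu> ((\<lambda>x. (x \<in> A, s x)) -` {q}) =
          (if fst q then snd q else 0) * \<mu> ((\<lambda>y. (y \<in> B, s (p y))) -` {q})"
    proof (cases b)
      case True
      have e1: "(\<lambda>x. (x \<in> A, s x)) -` {q} = {x \<in> A. s x = v}" using q True by auto
      have e2: "(\<lambda>y. (y \<in> B, s (p y))) -` {q} = g ` {x \<in> A. s x = v}"
      proof
        show "(\<lambda>y. (y \<in> B, s (p y))) -` {q} \<subseteq> g ` {x \<in> A. s x = v}"
        proof
          fix y assume "y \<in> (\<lambda>y. (y \<in> B, s (p y))) -` {q}"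
          hence y: "y \<in> B" "s (p y) = v" using q True by auto
          thus "y \<in> g ` {x \<in> A. s x = v}" using pB[OF y(1)] by (metis (mono_tags, lifting) image_eqI mem_Collect_eq)
        qed
        show "g ` {x \<in> A. s x = v} \<subseteq> (\<lambda>y. (y \<in> B, s (p y))) -` {q}"
          using gAB pA q True by auto
      qed
      show ?thesis unfolding e1 e2 using inv[of "{x \<in> A. s x = v}"] by simp
    next
      case False then show ?thesis using q by simp
    qed
  qed
qed

section \<open>The mean of bounded functions\<close>

definition rbdd :: "('a \<Rightarrow> real) \<Rightarrow> bool" where
  "rbdd u \<longleftrightarrow> (\<exists>M. \<forall>x. \<bar>u x\<bar> \<le> M)"

definition I :: "('a set \<Rightarrow> real) \<Rightarrow> ('a \<Rightarrow> real) \<Rightarrow> real" where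
  "I \<mu> u = Sup {J \<mu> s | s. simple s \<and> (\<forall>x. s x \<le> u x)}"

lemma I_lower:
  assumes mu: "fam \<mu>" and u: "rbdd u" and s: "simple s" "\<And>x. s x \<le> u x"
  shows "J \<mu> s \<le> I \<mu> u"
proof -
  obtain M where M: "\<And>x. \<bar>u x\<bar> \<le> M" using u unfolding rbdd_def by blast
  have "bdd_above {J \<mu> s | s. simple s \<and> (\<forall>x. s x \<le> u x)}"
    unfolding bdd_above_def
  proof (intro exI ballI)
    fix y assume "y \<in> {J \<mu> s | s. simple s \<and> (\<forall>x. s x \<le> u x)}"
    then obtain s' where s': "simple s'" "\<And>x. s' x \<le> u x" "y = J \<mu> s'" by blast
    have "s' x \<le> M" for x using s'(2)[of x] M[of x] by linarith
    hence "J \<mu> s' \<le> J \<mu> (\<lambda>x. M)"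
      by (intro J_mono[OF mu s'(1)]) auto
    thus "y \<le> J \<mu> (\<lambda>x. M)" using s'(3) by simp
  qed
  thus ?thesis unfolding I_def by (rule cSup_upper[rotated]) (use s in blast)
qed

lemma I_upper:
  assumes mu: "fam \<mu>" and u: "rbdd u" and t: "simple t" "\<And>x. u x \<le> t x"
  shows "I \<mu> u \<le> J \<mu> t"
proof -
  obtain M where M: "\<And>x. \<bar>u x\<bar> \<le> M" using u unfolding rbdd_def by blast
  have "- M \<le> u x" for x using M[of x] by linarith
  hence ne: "J \<mu> (\<lambda>x. - M) \<in> {J \<mu> s | s. simple s \<and> (\<forall>x. s x \<le> u x)}"
    by (auto intro!: exI[of _ "\<lambda>x. - M"])
  show ?thesis unfolding I_def
  proof (rule cSup_least)
    show "{J \<mu> s | s. simple s \<and> (\<forall>x. s x \<le> u x)} \<noteq> {}" using ne by blast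
  next
    fix y assume "y \<in> {J \<mu> s | s. simple s \<and> (\<forall>x. s x \<le> u x)}"
    then obtain s' where s': "simple s'" "\<And>x. s' x \<le> u x" "y = J \<mu> s'" by blast
    show "y \<le> J \<mu> t" unfolding s'(3)
      by (rule J_mono[OF mu s'(1) t(1)]) (use s'(2) t(2) in \<open>auto intro: order_trans\<close>)
  qed
qed

lemma floor_simple:
  assumes u: "rbdd u" and n: "n > (0::real)"
  shows "simple (\<lambda>x. of_int \<lfloor>u x * n\<rfloor> / n)"
proof -
  obtain M where M: "\<And>x. \<bar>u x\<bar> \<le> M" using u unfolding rbdd_def by blast
  have "range (\<lambda>x. of_int \<lfloor>u x * n\<rfloor> / n) \<subseteq> (\<lambda>k. of_int k / n) ` {- \<lceil>M * n\<rceil> - 1 .. \<lceil>M * n\<rceil>}"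
  proof
    fix y assume "y \<in> range (\<lambda>x. of_int \<lfloor>u x * n\<rfloor> / n)"
    then obtain x where y: "y = of_int \<lfloor>u x * n\<rfloor> / n" by blast
    have "\<bar>u x * n\<bar> \<le> M * n" using M[of x] n by (simp add: abs_mult mult_right_mono)
    hence "- (M * n) \<le> u x * n" "u x * n \<le> M * n" by auto
    hence "\<lfloor>u x * n\<rfloor> \<in> {- \<lceil>M * n\<rceil> - 1 .. \<lceil>M * n\<rceil>}"
      by (auto simp: floor_le_iff le_floor_iff) linarith+
    thus "y \<in> (\<lambda>k. of_int k / n) ` {- \<lceil>M * n\<rceil> - 1 .. \<lceil>M * n\<rceil>}" using y by blast
  qed
  thus ?thesis unfolding simple_def by (rule finite_subset) simp
qed

lemma I_sandwich:
  assumes mu: "fam \<mu>" and u: "rbdd u" and e: "e > 0"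
  obtains s t where "simple s" "simple t" "\<And>x. s x \<le> u x" "\<And>x. u x \<le> t x" "J \<mu> t - J \<mu> s \<le> e"
proof -
  define n :: real where "n = of_nat (nat \<lceil>\<mu> UNIV / e\<rceil> + 1)"
  have n: "n > 0" unfolding n_def by simp
  have nbig: "\<mu> UNIV / e \<le> n" unfolding n_def by linarith
  define s where "s = (\<lambda>x. of_int \<lfloor>u x * n\<rfloor> / n)"
  define t where "t = (\<lambda>x. s x + 1 / n)"
  have ss: "simple s" unfolding s_def by (rule floor_simple[OF u n])
  have st: "simple t" unfolding t_def by (rule simple_pair[OF ss simple_const, of "\<lambda>a b. a + b"])
  have le1: "s x \<le> u x" for x
    unfolding s_def using n by (simp add: divide_le_eq) 
  have le2: "u x \<le> t x" for x
  proof -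
    have "u x * n < of_int \<lfloor>u x * n\<rfloor> + 1" by linarith
    hence "u x < (of_int \<lfloor>u x * n\<rfloor> + 1) / n" using n by (simp add: less_divide_eq)
    thus ?thesis unfolding t_def s_def by (simp add: add_divide_distrib)
  qed
  have "J \<mu> t = J \<mu> s + J \<mu> (\<lambda>x. 1 / n)" unfolding t_def by (rule J_add[OF mu ss simple_const])
  hence "J \<mu> t - J \<mu> s = \<mu> UNIV / n" using J_const[OF mu] by simp
  also have "\<dots> \<le> e" using nbig n e by (simp add: divide_le_eq mult.commute pos_divide_le_eq)
  finally show ?thesis using that ss st le1 le2 by blast
qed

lemma close_eq:
  fixes a b :: real
  assumes "\<And>e. e > 0 \<Longrightarrow> \<bar>a - b\<bar> \<le> e"
  shows "a = b"
proof -
  have "\<bar>a - b\<bar> \<le> 0 + e" if "e > 0" for e using assms that by simp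
  hence "\<bar>a - b\<bar> \<le> 0" by (rule field_le_epsilon)
  thus ?thesis by simp
qed

lemma rbdd_add: "rbdd u \<Longrightarrow> rbdd v \<Longrightarrow> rbdd (\<lambda>x. u x + v x)"
  unfolding rbdd_def by (meson abs_triangle_ineq add_mono order_trans)

lemma rbdd_scale: "rbdd u \<Longrightarrow> rbdd (\<lambda>x. c * u x)"
  unfolding rbdd_def by (metis abs_mult mult_left_mono abs_ge_zero)

lemma rbdd_const[simp]: "rbdd (\<lambda>x. c)"
  unfolding rbdd_def by blast

lemma I_add:
  assumes mu: "fam \<mu>" and u: "rbdd u" and v: "rbdd v"
  shows "I \<mu> (\<lambda>x. u x + v x) = I \<mu> u + I \<mu> v"
proof (rule close_eq)
  fix e :: real assume e: "e > 0"
  obtain s1 t1 where 1: "simple s1" "simple t1" "\<And>x. s1 x \<le> u x" "\<And>x. u x \<le> t1 x" "J \<mu> t1 - J \<mu> s1 \<le> e/2"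
    using I_sandwich[OF mu u, of "e/2"] e by auto
  obtain s2 t2 where 2: "simple s2" "simple t2" "\<And>x. s2 x \<le> v x" "\<And>x. v x \<le> t2 x" "J \<mu> t2 - J \<mu> s2 \<le> e/2"
    using I_sandwich[OF mu v, of "e/2"] e by auto
  have uv: "rbdd (\<lambda>x. u x + v x)" by (rule rbdd_add[OF u v])
  have a: "J \<mu> (\<lambda>x. s1 x + s2 x) \<le> I \<mu> (\<lambda>x. u x + v x)"
    by (rule I_lower[OF mu uv simple_pair[OF 1(1) 2(1)]]) (simp add: 1(3) 2(3) add_mono)
  have b: "I \<mu> (\<lambda>x. u x + v x) \<le> J \<mu> (\<lambda>x. t1 x + t2 x)"
    by (rule I_upper[OF mu uv simple_pair[OF 1(2) 2(2)]]) (simp add: 1(4) 2(4) add_mono)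
  have c: "J \<mu> s1 \<le> I \<mu> u" "I \<mu> u \<le> J \<mu> t1" using I_lower[OF mu u 1(1) 1(3)] I_upper[OF mu u 1(2) 1(4)] by auto
  have d: "J \<mu> s2 \<le> I \<mu> v" "I \<mu> v \<le> J \<mu> t2" using I_lower[OF mu v 2(1) 2(3)] I_upper[OF mu v 2(2) 2(4)] by auto
  show "\<bar>I \<mu> (\<lambda>x. u x + v x) - (I \<mu> u + I \<mu> v)\<bar> \<le> e"
    using a b c d 1(5) 2(5) J_add[OF mu 1(1) 2(1)] J_add[OF mu 1(2) 2(2)] by linarith
qed

lemma I_scale:
  assumes mu: "fam \<mu>" and u: "rbdd u"
  shows "I \<mu> (\<lambda>x. c * u x) = c * I \<mu> u"
proof (rule close_eq)
  fix e :: real assume e: "e > 0"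
  define e' where "e' = e / (\<bar>c\<bar> + 1)"
  have e': "e' > 0" unfolding e'_def using e by (simp add: add_pos_nonneg)
  have ce: "\<bar>c\<bar> * e' \<le> e" unfolding e'_def using e by (simp add: field_simps)
  obtain s t where st: "simple s" "simple t" "\<And>x. s x \<le> u x" "\<And>x. u x \<le> t x" "J \<mu> t - J \<mu> s \<le> e'"
    using I_sandwich[OF mu u e'] by auto
  have cu: "rbdd (\<lambda>x. c * u x)" by (rule rbdd_scale[OF u])
  have c1: "J \<mu> s \<le> I \<mu> u" "I \<mu> u \<le> J \<mu> t" using I_lower[OF mu u st(1) st(3)] I_upper[OF mu u st(2) st(4)] by auto
  show "\<bar>I \<mu> (\<lambda>x. c * u x) - c * I \<mu> u\<bar> \<le> e"
  proof (cases "c \<ge> 0")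
    case True
    have a: "J \<mu> (\<lambda>x. c * s x) \<le> I \<mu> (\<lambda>x. c * u x)"
      by (rule I_lower[OF mu cu simple_image[OF st(1)]]) (simp add: st(3) True mult_left_mono)
    have b: "I \<mu> (\<lambda>x. c * u x) \<le> J \<mu> (\<lambda>x. c * t x)"
      by (rule I_upper[OF mu cu simple_image[OF st(2)]]) (simp add: st(4) True mult_left_mono)
    have "c * J \<mu> s \<le> c * I \<mu> u" "c * I \<mu> u \<le> c * J \<mu> t" using c1 True by (auto intro: mult_left_mono)
    moreover have "c * J \<mu> t - c * J \<mu> s \<le> \<bar>c\<bar> * e'" using st(5) True by (simp add: right_diff_distrib[symmetric] mult_left_mono)
    ultimately show ?thesis using a b ce J_scale[OF mu st(1), of c] J_scale[OF mu st(2), of c] by linarith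
  next
    case False
    have a: "J \<mu> (\<lambda>x. c * t x) \<le> I \<mu> (\<lambda>x. c * u x)"
      by (rule I_lower[OF mu cu simple_image[OF st(2)]]) (use st(4) False in \<open>simp add: mult_left_mono_neg\<close>)
    have b: "I \<mu> (\<lambda>x. c * u x) \<le> J \<mu> (\<lambda>x. c * s x)"
      by (rule I_upper[OF mu cu simple_image[OF st(1)]]) (use st(3) False in \<open>simp add: mult_left_mono_neg\<close>)
    have "c * J \<mu> t \<le> c * I \<mu> u" "c * I \<mu> u \<le> c * J \<mu> s" using c1 False by (auto intro: mult_left_mono_neg)
    moreover have "c * J \<mu> s - c * J \<mu> t \<le> \<bar>c\<bar> * e'"
    proof -
      have "c * J \<mu> s - c * J \<mu> t = (- c) * (J \<mu> t - J \<mu> s)" by (simp add: algebra_simps)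
      also have "\<dots> \<le> (- c) * e'" using st(5) False by (intro mult_left_mono) auto
      finally show ?thesis using False by simp
    qed
    ultimately show ?thesis using a b ce J_scale[OF mu st(1), of c] J_scale[OF mu st(2), of c] by linarith
  qed
qed

lemma I_mono:
  assumes mu: "fam \<mu>" and u: "rbdd u" and v: "rbdd v" and le: "\<And>x. u x \<le> v x"
  shows "I \<mu> u \<le> I \<mu> v"
proof -
  have "I \<mu> u \<le> I \<mu> v + e" if e: "e > 0" for e
  proof -
    obtain s t where st: "simple s" "simple t" "\<And>x. s x \<le> u x" "\<And>x. u x \<le> t x" "J \<mu> t - J \<mu> s \<le> e"
      using I_sandwich[OF mu u e] by auto
    have "I \<mu> u \<le> J \<mu> t" by (rule I_upper[OF mu u st(2) st(4)])
    moreover have "J \<mu> s \<le> I \<mu> v" by (rule I_lower[OF mu v st(1)]) (use st(3) le in \<open>auto intro: order_trans\<close>)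
    ultimately show ?thesis using st(5) by linarith
  qed
  thus ?thesis by (rule field_le_epsilon)
qed

lemma I_const:
  assumes mu: "fam \<mu>"
  shows "I \<mu> (\<lambda>x. c) = c * \<mu> UNIV"
proof -
  have "J \<mu> (\<lambda>x. c) \<le> I \<mu> (\<lambda>x. c)" by (rule I_lower[OF mu]) auto
  moreover have "I \<mu> (\<lambda>x. c) \<le> J \<mu> (\<lambda>x. c)" by (rule I_upper[OF mu]) auto
  ultimately show ?thesis using J_const[OF mu, of c] by simp
qed

lemma I_trans:
  assumes mu: "fam \<mu>" and u: "rbdd u"
    and inv: "\<And>A'. A' \<subseteq> A \<Longrightarrow> \<mu> A' = \<mu> (g ` A')"
    and gAB: "g ` A = B" and pB: "\<And>y. y \<in> B \<Longrightarrow> p y \<in> A \<and> g (p y) = y"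
    and pA: "\<And>x. x \<in> A \<Longrightarrow> p (g x) = x"
  shows "I \<mu> (\<lambda>x. if x \<in> A then u x else 0) = I \<mu> (\<lambda>y. if y \<in> B then u (p y) else 0)"
proof (rule close_eq)
  fix e :: real assume e: "e > 0"
  obtain s t where st: "simple s" "simple t" "\<And>x. s x \<le> u x" "\<And>x. u x \<le> t x" "J \<mu> t - J \<mu> s \<le> e"
    using I_sandwich[OF mu u e] by auto
  obtain M where M: "\<And>x. \<bar>u x\<bar> \<le> M" using u unfolding rbdd_def by blast
  have uA: "rbdd (\<lambda>x. if x \<in> A then u x else 0)" unfolding rbdd_def using M
    by (intro exI[of _ M]) (auto intro: order_trans[OF _ M])
  have uB: "rbdd (\<lambda>y. if y \<in> B then u (p y) else 0)" unfolding rbdd_def using M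
    by (intro exI[of _ M]) (auto intro: order_trans[OF _ M])
  have sA: "simple (\<lambda>x. if x \<in> A then s x else 0)" "simple (\<lambda>x. if x \<in> A then t x else 0)"
    using simple_restrict st(1,2) by auto
  have sp: "simple (\<lambda>y. s (p y))" "simple (\<lambda>y. t (p y))"
    using simple_comp[OF st(1)] simple_comp[OF st(2)] by auto
  have sB: "simple (\<lambda>y. if y \<in> B then s (p y) else 0)" "simple (\<lambda>y. if y \<in> B then t (p y) else 0)"
    using simple_restrict[OF sp(1)] simple_restrict[OF sp(2)] by auto
  have a1: "J \<mu> (\<lambda>x. if x \<in> A then s x else 0) \<le> I \<mu> (\<lambda>x. if x \<in> A then u x else 0)"
    by (rule I_lower[OF mu uA sA(1)]) (simp add: st(3))
  have a2: "I \<mu> (\<lambda>x. if x \<in> A then u x else 0) \<le> J \<mu> (\<lambda>x. if x \<in> A then t x else 0)"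
    by (rule I_upper[OF mu uA sA(2)]) (simp add: st(4))
  have b1: "J \<mu> (\<lambda>y. if y \<in> B then s (p y) else 0) \<le> I \<mu> (\<lambda>y. if y \<in> B then u (p y) else 0)"
    by (rule I_lower[OF mu uB sB(1)]) (simp add: st(3))
  have b2: "I \<mu> (\<lambda>y. if y \<in> B then u (p y) else 0) \<le> J \<mu> (\<lambda>y. if y \<in> B then t (p y) else 0)"
    by (rule I_upper[OF mu uB sB(2)]) (simp add: st(4))
  have eqs: "J \<mu> (\<lambda>x. if x \<in> A then s x else 0) = J \<mu> (\<lambda>y. if y \<in> B then s (p y) else 0)"
    by (rule J_trans[OF mu st(1) inv gAB pB pA])
  have eqt: "J \<mu> (\<lambda>x. if x \<in> A then t x else 0) = J \<mu> (\<lambda>y. if y \<in> B then t (p y) else 0)"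
    by (rule J_trans[OF mu st(2) inv gAB pB pA])
  have sd: "simple (\<lambda>x. t x - s x)" by (rule simple_pair[OF st(2) st(1)])
  have "J \<mu> (\<lambda>x. if x \<in> A then t x else 0) = J \<mu> (\<lambda>x. if x \<in> A then s x else 0) + J \<mu> (\<lambda>x. if x \<in> A then t x - s x else 0)"
  proof -
    have "(\<lambda>x. if x \<in> A then t x else 0) = (\<lambda>x. (if x \<in> A then s x else 0) + (if x \<in> A then t x - s x else 0))" by auto
    thus ?thesis using J_add[OF mu sA(1) simple_restrict[OF sd]] by simp
  qed
  moreover have "J \<mu> (\<lambda>x. if x \<in> A then t x - s x else 0) \<le> J \<mu> (\<lambda>x. t x - s x)"
    by (rule J_mono[OF mu simple_restrict[OF sd] sd]) (use st(3,4) in \<open>auto intro: order_trans\<close>)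
  moreover have "J \<mu> (\<lambda>x. t x - s x) = J \<mu> t - J \<mu> s"
  proof -
    have "J \<mu> t = J \<mu> (\<lambda>x. s x + (t x - s x))" by simp
    also have "\<dots> = J \<mu> s + J \<mu> (\<lambda>x. t x - s x)" by (rule J_add[OF mu st(1) sd])
    finally show ?thesis by simp
  qed
  ultimately show "\<bar>I \<mu> (\<lambda>x. if x \<in> A then u x else 0) - I \<mu> (\<lambda>y. if y \<in> B then u (p y) else 0)\<bar> \<le> e"
    using a1 a2 b1 b2 eqs eqt st(5) by linarith
qed


definition Ic :: "('a set \<Rightarrow> real) \<Rightarrow> ('a \<Rightarrow> complex) \<Rightarrow> complex" where
  "Ic \<mu> u = Complex (I \<mu> (\<lambda>x. Re (u x))) (I \<mu> (\<lambda>x. Im (u x)))"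

definition cbdd :: "('a \<Rightarrow> complex) \<Rightarrow> bool" where
  "cbdd u \<longleftrightarrow> (\<exists>M. \<forall>x. cmod (u x) \<le> M)"

lemma cbdd_Re: "cbdd u \<Longrightarrow> rbdd (\<lambda>x. Re (u x))"
  unfolding cbdd_def rbdd_def by (meson abs_Re_le_cmod order_trans)

lemma cbdd_Im: "cbdd u \<Longrightarrow> rbdd (\<lambda>x. Im (u x))"
  unfolding cbdd_def rbdd_def by (meson abs_Im_le_cmod order_trans)

lemma cbdd_add:
  assumes "cbdd u" "cbdd v" shows "cbdd (\<lambda>x. u x + v x)"
proof -
  obtain M where M: "\<And>x. cmod (u x) \<le> M" using assms(1) unfolding cbdd_def by blast
  obtain M' where M': "\<And>x. cmod (v x) \<le> M'" using assms(2) unfolding cbdd_def by blast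
  have "cmod (u x + v x) \<le> M + M'" for x
    using norm_triangle_ineq[of "u x" "v x"] M[of x] M'[of x] by linarith
  thus ?thesis unfolding cbdd_def by blast
qed

lemma cbdd_scale:
  assumes "cbdd u" shows "cbdd (\<lambda>x. c * u x)"
proof -
  obtain M where M: "\<And>x. cmod (u x) \<le> M" using assms(1) unfolding cbdd_def by blast
  have "cmod (c * u x) \<le> cmod c * M" for x
    unfolding norm_mult by (rule mult_left_mono[OF M norm_ge_zero])
  thus ?thesis unfolding cbdd_def by blast
qed

lemma cbdd_const[simp]: "cbdd (\<lambda>x. c)"
  unfolding cbdd_def by blast

lemma cbdd_restrict:
  assumes "cbdd u" shows "cbdd (\<lambda>x. if x \<in> A then u x else 0)"
proof -
  obtain M where M: "\<And>x. cmod (u x) \<le> M" using assms(1) unfolding cbdd_def by blast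
  have M0: "0 \<le> M" using norm_ge_zero[of "u undefined"] M[of undefined] by linarith
  have "cmod (if x \<in> A then u x else 0) \<le> M" for x
    using M[of x] M0 by auto
  thus ?thesis unfolding cbdd_def by blast
qed

lemma cbdd_sum: "finite S \<Longrightarrow> (\<And>i. i \<in> S \<Longrightarrow> cbdd (u i)) \<Longrightarrow> cbdd (\<lambda>x. \<Sum>i\<in>S. u i x)"
  by (induction S rule: finite_induct) (auto intro: cbdd_add)

lemma cbdd_I: "(\<And>x. cmod (u x) \<le> M) \<Longrightarrow> cbdd u"
  unfolding cbdd_def by blast

lemma Ic_add:
  assumes mu: "fam \<mu>" and u: "cbdd u" and v: "cbdd v"
  shows "Ic \<mu> (\<lambda>x. u x + v x) = Ic \<mu> u + Ic \<mu> v"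
  unfolding Ic_def using I_add[OF mu cbdd_Re[OF u] cbdd_Re[OF v]] I_add[OF mu cbdd_Im[OF u] cbdd_Im[OF v]]
  by (simp add: complex_eq_iff)

lemma Ic_scale:
  assumes mu: "fam \<mu>" and u: "cbdd u"
  shows "Ic \<mu> (\<lambda>x. c * u x) = c * Ic \<mu> u"
proof -
  have R: "rbdd (\<lambda>x. Re (u x))" and M: "rbdd (\<lambda>x. Im (u x))" using cbdd_Re[OF u] cbdd_Im[OF u] .
  have e1: "(\<lambda>x. Re (c * u x)) = (\<lambda>x. Re c * Re (u x) + (- Im c) * Im (u x))" by (simp add: fun_eq_iff)
  have "I \<mu> (\<lambda>x. Re c * Re (u x) + (- Im c) * Im (u x)) = I \<mu> (\<lambda>x. Re c * Re (u x)) + I \<mu> (\<lambda>x. (- Im c) * Im (u x))"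
    by (rule I_add[OF mu rbdd_scale[OF R] rbdd_scale[OF M]])
  also have "\<dots> = Re c * I \<mu> (\<lambda>x. Re (u x)) + (- Im c) * I \<mu> (\<lambda>x. Im (u x))"
    by (simp only: I_scale[OF mu R] I_scale[OF mu M])
  finally have 1: "I \<mu> (\<lambda>x. Re (c * u x)) = Re c * I \<mu> (\<lambda>x. Re (u x)) + (- Im c) * I \<mu> (\<lambda>x. Im (u x))"
    unfolding e1 .
  have e2: "(\<lambda>x. Im (c * u x)) = (\<lambda>x. Re c * Im (u x) + Im c * Re (u x))" by (simp add: fun_eq_iff add.commute)
  have "I \<mu> (\<lambda>x. Re c * Im (u x) + Im c * Re (u x)) = I \<mu> (\<lambda>x. Re c * Im (u x)) + I \<mu> (\<lambda>x. Im c * Re (u x))"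
    by (rule I_add[OF mu rbdd_scale[OF M] rbdd_scale[OF R]])
  also have "\<dots> = Re c * I \<mu> (\<lambda>x. Im (u x)) + Im c * I \<mu> (\<lambda>x. Re (u x))"
    by (simp only: I_scale[OF mu R] I_scale[OF mu M])
  finally have 2: "I \<mu> (\<lambda>x. Im (c * u x)) = Re c * I \<mu> (\<lambda>x. Im (u x)) + Im c * I \<mu> (\<lambda>x. Re (u x))"
    unfolding e2 .
  show ?thesis unfolding Ic_def complex_eq_iff using 1 2 by (simp add: algebra_simps)
qed

lemma Ic_sum:
  assumes mu: "fam \<mu>" and S: "finite S"
  shows "(\<And>i. i \<in> S \<Longrightarrow> cbdd (u i)) \<Longrightarrow> Ic \<mu> (\<lambda>x. \<Sum>i\<in>S. u i x) = (\<Sum>i\<in>S. Ic \<mu> (u i))"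
  using S
proof (induction S rule: finite_induct)
  case empty
  then show ?case using I_const[OF mu, of 0] by (simp add: Ic_def complex_eq_iff)
next
  case (insert a S)
  have "Ic \<mu> (\<lambda>x. \<Sum>i\<in>insert a S. u i x) = Ic \<mu> (\<lambda>x. u a x + (\<Sum>i\<in>S. u i x))"
    using insert.hyps by simp
  also have "\<dots> = Ic \<mu> (u a) + Ic \<mu> (\<lambda>x. \<Sum>i\<in>S. u i x)"
    using Ic_add[OF mu, of "u a" "\<lambda>x. \<Sum>i\<in>S. u i x"] insert.prems cbdd_sum[OF insert.hyps(1), of u] by simp
  finally show ?case using insert by simp
qed

lemma Ic_const:
  assumes mu: "fam \<mu>"
  shows "Ic \<mu> (\<lambda>x. c) = c * complex_of_real (\<mu> UNIV)"
  unfolding Ic_def using I_const[OF mu] by (simp add: complex_eq_iff)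

lemma I_abs_bound:
  assumes mu: "fam \<mu>" and M: "\<And>x. \<bar>u x\<bar> \<le> M"
  shows "\<bar>I \<mu> u\<bar> \<le> M * \<mu> UNIV"
proof -
  have u: "rbdd u" unfolding rbdd_def using M by blast
  have b: "- M \<le> u x" "u x \<le> M" for x using M[of x] by linarith+
  have "I \<mu> u \<le> I \<mu> (\<lambda>x. M)" by (rule I_mono[OF mu u rbdd_const]) (rule b)
  moreover have "I \<mu> (\<lambda>x. - M) \<le> I \<mu> u" by (rule I_mono[OF mu rbdd_const u]) (rule b)
  ultimately show ?thesis using I_const[OF mu, of M] I_const[OF mu, of "-M"] by simp
qed

lemma Ic_bound:
  assumes mu: "fam \<mu>" and M: "\<And>x. cmod (u x) \<le> M"
  shows "cmod (Ic \<mu> u) \<le> 2 * M * \<mu> UNIV"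
proof -
  have "\<bar>I \<mu> (\<lambda>x. Re (u x))\<bar> \<le> M * \<mu> UNIV"
    by (rule I_abs_bound[OF mu]) (meson M abs_Re_le_cmod order_trans)
  moreover have "\<bar>I \<mu> (\<lambda>x. Im (u x))\<bar> \<le> M * \<mu> UNIV"
    by (rule I_abs_bound[OF mu]) (meson M abs_Im_le_cmod order_trans)
  ultimately show ?thesis unfolding Ic_def using cmod_le[of "Complex (I \<mu> (\<lambda>x. Re (u x))) (I \<mu> (\<lambda>x. Im (u x)))"]
    by simp
qed

lemma Ic_diff_bound:
  assumes mu: "fam \<mu>" and u: "cbdd u" and v: "cbdd v" and M: "\<And>x. cmod (u x - v x) \<le> M"
  shows "cmod (Ic \<mu> u - Ic \<mu> v) \<le> 2 * M * \<mu> UNIV"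
proof -
  have "Ic \<mu> u = Ic \<mu> (\<lambda>x. (u x - v x) + v x)" by simp
  also have "\<dots> = Ic \<mu> (\<lambda>x. u x - v x) + Ic \<mu> v"
    by (rule Ic_add[OF mu _ v]) (rule cbdd_I[OF M])
  finally have "Ic \<mu> u - Ic \<mu> v = Ic \<mu> (\<lambda>x. u x - v x)" by simp
  thus ?thesis using Ic_bound[OF mu M] by simp
qed

lemma Ic_pos:
  assumes mu: "fam \<mu>" and u: "cbdd u" and r: "\<And>x. u x \<in> \<real>" and c: "\<And>x. c \<le> Re (u x)"
  shows "Ic \<mu> u \<in> \<real>" "c * \<mu> UNIV \<le> Re (Ic \<mu> u)"
proof -
  have "(\<lambda>x. Im (u x)) = (\<lambda>x. 0)" using r by (auto simp: complex_is_Real_iff)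
  hence "I \<mu> (\<lambda>x. Im (u x)) = 0" using I_const[OF mu, of 0] by simp
  thus "Ic \<mu> u \<in> \<real>" unfolding Ic_def by (simp add: complex_is_Real_iff)
  have "I \<mu> (\<lambda>x. c) \<le> I \<mu> (\<lambda>x. Re (u x))" by (rule I_mono[OF mu rbdd_const cbdd_Re[OF u]]) (rule c)
  thus "c * \<mu> UNIV \<le> Re (Ic \<mu> u)" unfolding Ic_def using I_const[OF mu, of c] by simp
qed

lemma Ic_trans:
  assumes mu: "fam \<mu>" and u: "cbdd u"
    and inv: "\<And>A'. A' \<subseteq> A \<Longrightarrow> \<mu> A' = \<mu> (g ` A')"
    and gAB: "g ` A = B" and pB: "\<And>y. y \<in> B \<Longrightarrow> p y \<in> A \<and> g (p y) = y"
    and pA: "\<And>x. x \<in> A \<Longrightarrow> p (g x) = x"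
  shows "Ic \<mu> (\<lambda>x. if x \<in> A then u x else 0) = Ic \<mu> (\<lambda>y. if y \<in> B then u (p y) else 0)"
proof -
  have 1: "I \<mu> (\<lambda>x. if x \<in> A then Re (u x) else 0) = I \<mu> (\<lambda>y. if y \<in> B then Re (u (p y)) else 0)"
    by (rule I_trans[OF mu cbdd_Re[OF u] inv gAB pB pA])
  have 2: "I \<mu> (\<lambda>x. if x \<in> A then Im (u x) else 0) = I \<mu> (\<lambda>y. if y \<in> B then Im (u (p y)) else 0)"
    by (rule I_trans[OF mu cbdd_Im[OF u] inv gAB pB pA])
  have e1: "(\<lambda>x. Re (if x \<in> A then u x else 0)) = (\<lambda>x. if x \<in> A then Re (u x) else 0)" by auto
  have e2: "(\<lambda>x. Im (if x \<in> A then u x else 0)) = (\<lambda>x. if x \<in> A then Im (u x) else 0)" by auto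
  have e3: "(\<lambda>x. Re (if x \<in> B then u (p x) else 0)) = (\<lambda>x. if x \<in> B then Re (u (p x)) else 0)" by auto
  have e4: "(\<lambda>x. Im (if x \<in> B then u (p x) else 0)) = (\<lambda>x. if x \<in> B then Im (u (p x)) else 0)" by auto
  show ?thesis unfolding Ic_def e1 e2 e3 e4 1 2 ..
qed

section \<open>Exchange lemma\<close>

definition inv_mu :: "('a::metric_space set \<Rightarrow> real) \<Rightarrow> bool" where
  "inv_mu \<mu> \<longleftrightarrow> (\<forall>f A B. partial_translation f A B \<longrightarrow> \<mu> A = \<mu> B)"

lemma point_decomp:
  fixes r :: real and N :: nat and ix :: "'a::metric_space \<Rightarrow> 'a \<Rightarrow> nat" and nb :: "'a \<Rightarrow> nat \<Rightarrow> 'a"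
  assumes card: "\<And>x::'a. card (ball x r) \<le> N"
    and ix1: "\<And>x y. y \<in> ball x r \<Longrightarrow> ix x y < card (ball x r) \<and> nb x (ix x y) = y"
    and ix2: "\<And>x j. j < card (ball x r) \<Longrightarrow> nb x j \<in> ball x r \<and> ix x (nb x j) = j"
  defines "A \<equiv> \<lambda>i j. {x. j < card (ball x r) \<and> ix (nb x j) x = i}"
  shows "(\<Sum>y\<in>ball x r. K x y) = (\<Sum>q\<in>{..<N} \<times> {..<N}. if x \<in> A (fst q) (snd q) then K x (nb x (snd q)) else 0)"
proof -
  define Q where "Q = {q \<in> {..<N} \<times> {..<N}. x \<in> A (fst q) (snd q)}"
  have "(\<Sum>q\<in>{..<N} \<times> {..<N}. if x \<in> A (fst q) (snd q) then K x (nb x (snd q)) else 0)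
      = (\<Sum>q\<in>Q. K x (nb x (snd q)))"
    unfolding Q_def by (simp add: sum.inter_filter[symmetric])
  also have "\<dots> = (\<Sum>y\<in>ball x r. K x y)"
  proof (rule sum.reindex_bij_witness[where i="\<lambda>y. (ix y x, ix x y)" and j="\<lambda>q. nb x (snd q)"])
    fix q assume q: "q \<in> Q"
    hence qA: "snd q < card (ball x r)" "ix (nb x (snd q)) x = fst q" unfolding Q_def A_def by auto
    show "(ix (nb x (snd q)) x, ix x (nb x (snd q))) = q" using qA ix2[OF qA(1)] by (simp add: prod_eq_iff)
    show "nb x (snd q) \<in> ball x r" using ix2[OF qA(1)] by simp
    show "K x (nb x (snd q)) = K x (nb x (snd q))" ..
  next
    fix y assume y: "y \<in> ball x r"
    have xy: "x \<in> ball y r" using y by (simp add: dist_commute)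
    show "nb x (snd (ix y x, ix x y)) = y" using ix1[OF y] by simp
    have "ix y x < N" using ix1[OF xy] card[of y] by linarith
    moreover have "ix x y < N" using ix1[OF y] card[of x] by linarith
    moreover have "x \<in> A (ix y x) (ix x y)" unfolding A_def using ix1[OF y] by simp
    ultimately show "(ix y x, ix x y) \<in> Q" unfolding Q_def by simp
  qed
  finally show ?thesis by simp
qed

lemma exchange:
  fixes r :: real and N :: nat and K :: "'a::metric_space \<Rightarrow> 'a \<Rightarrow> complex"
  assumes mu: "fam \<mu>" and inv: "inv_mu \<mu>"
    and fin: "\<And>x::'a. finite (ball x r)" and card: "\<And>x::'a. card (ball x r) \<le> N"
    and Kb: "\<And>x y. cmod (K x y) \<le> C"
  shows "Ic \<mu> (\<lambda>x. \<Sum>y\<in>ball x r. K x y) = Ic \<mu> (\<lambda>y. \<Sum>x\<in>ball y r. K x y)"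
proof -
  define ix where "ix = (\<lambda>x::'a. SOME h. bij_betw h (ball x r) {0..<card (ball x r)})"
  define nb where "nb = (\<lambda>x. inv_into (ball x r) (ix x))"
  have bij: "bij_betw (ix x) (ball x r) {0..<card (ball x r)}" for x
    unfolding ix_def
    by (rule someI_ex[of "\<lambda>h. bij_betw h (ball x r) {0..<card (ball x r)}"]) (rule ex_bij_betw_finite_nat[OF fin[of x]])
  have ix1: "ix x y < card (ball x r) \<and> nb x (ix x y) = y" if "y \<in> ball x r" for x y
    using bij[of x] that unfolding nb_def by (auto simp: bij_betw_def inv_into_f_f)
  have ix2: "nb x j \<in> ball x r \<and> ix x (nb x j) = j" if "j < card (ball x r)" for x j
  proof -
    have j: "j \<in> ix x ` ball x r" using bij[of x] that by (simp add: bij_betw_def)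
    show ?thesis using inv_into_into[OF j] f_inv_into_f[OF j] unfolding nb_def by simp
  qed
  define A where "A = (\<lambda>i j. {x. j < card (ball x r) \<and> ix (nb x j) x = i})"
  have Adef: "A \<equiv> \<lambda>i j. {x. j < card (ball x r) \<and> ix (nb x j) x = i}" unfolding A_def by simp
  let ?Q = "{..<N} \<times> {..<N}"
  have dec1: "(\<Sum>y\<in>ball x r. K x y) = (\<Sum>q\<in>?Q. if x \<in> A (fst q) (snd q) then K x (nb x (snd q)) else 0)" for x
    unfolding A_def by (rule point_decomp[OF card ix1 ix2])
  have dec2: "(\<Sum>x\<in>ball y r. K x y) = (\<Sum>q\<in>?Q. if y \<in> A (fst q) (snd q) then K (nb y (snd q)) y else 0)" for y
    unfolding A_def by (rule point_decomp[OF card ix1 ix2, of "\<lambda>a b. K b a"])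
  have key: "nb x j \<in> A j i \<and> nb (nb x j) i = x \<and> dist x (nb x j) < r" if x: "x \<in> A i j" for x i j
  proof -
    have j: "j < card (ball x r)" "ix (nb x j) x = i" using x unfolding A_def by auto
    define y where "y = nb x j"
    have y: "y \<in> ball x r" "ix x y = j" using ix2[OF j(1)] unfolding y_def by auto
    have xy: "x \<in> ball y r" using y(1) by (simp add: dist_commute)
    have "ix y x < card (ball y r)" "nb y (ix y x) = x" using ix1[OF xy] by auto
    hence "i < card (ball y r)" "nb y i = x" using j(2) unfolding y_def by auto
    moreover have "dist x y < r" using y(1) by simp
    ultimately show ?thesis unfolding A_def y_def[symmetric] using y(2) by simp
  qed
  have cb: "cbdd (\<lambda>x. if x \<in> A i j then K x (nb x j) else 0)" for i j
    by (rule cbdd_restrict, rule cbdd_I[of _ C]) (rule Kb)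
  have cb2: "cbdd (\<lambda>y. if y \<in> A i j then K (nb y j) y else 0)" for i j
    by (rule cbdd_restrict, rule cbdd_I[of _ C]) (rule Kb)
  have trm: "Ic \<mu> (\<lambda>x. if x \<in> A i j then K x (nb x j) else 0) = Ic \<mu> (\<lambda>y. if y \<in> A j i then K (nb y i) y else 0)" for i j
  proof -
    let ?g = "\<lambda>x. nb x j" and ?p = "\<lambda>y. nb y i"
    have gAB: "?g ` A i j = A j i"
    proof
      show "?g ` A i j \<subseteq> A j i" using key by blast
      show "A j i \<subseteq> ?g ` A i j"
      proof
        fix y assume "y \<in> A j i"
        hence "nb y i \<in> A i j" "nb (nb y i) j = y" using key[of y j i] by auto
        thus "y \<in> ?g ` A i j" by (metis image_eqI)
      qed
    qed
    have pB: "?p y \<in> A i j \<and> ?g (?p y) = y" if "y \<in> A j i" for y using key[OF that] by simp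
    have pA: "?p (?g x) = x" if "x \<in> A i j" for x using key[OF that] by simp
    have invA: "\<mu> A' = \<mu> (?g ` A')" if "A' \<subseteq> A i j" for A'
    proof -
      have "inj_on ?g A'" by (rule inj_on_inverseI[of _ ?p]) (use pA that in auto)
      hence "bij_betw ?g A' (?g ` A')" by (simp add: bij_betw_def)
      moreover have "\<forall>x\<in>A'. dist x (?g x) \<le> r"
      proof
        fix x assume "x \<in> A'"
        hence "x \<in> A i j" using that by blast
        thus "dist x (?g x) \<le> r" using key[of x i j] by simp
      qed
      ultimately have "partial_translation ?g A' (?g ` A')" unfolding partial_translation_def by blast
      thus ?thesis using inv unfolding inv_mu_def by blast
    qed
    have "Ic \<mu> (\<lambda>x. if x \<in> A i j then K x (nb x j) else 0) = Ic \<mu> (\<lambda>y. if y \<in> A j i then K (?p y) (nb (?p y) j) else 0)"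
      by (rule Ic_trans[OF mu _ invA gAB pB pA]) (rule cbdd_I[of _ C], rule Kb)
    also have "\<dots> = Ic \<mu> (\<lambda>y. if y \<in> A j i then K (nb y i) y else 0)"
      by (rule arg_cong[where f="Ic \<mu>"]) (use pB in auto)
    finally show ?thesis .
  qed
  have "Ic \<mu> (\<lambda>x. \<Sum>y\<in>ball x r. K x y) = Ic \<mu> (\<lambda>x. \<Sum>q\<in>?Q. if x \<in> A (fst q) (snd q) then K x (nb x (snd q)) else 0)"
    using dec1 by simp
  also have "\<dots> = (\<Sum>q\<in>?Q. Ic \<mu> (\<lambda>x. if x \<in> A (fst q) (snd q) then K x (nb x (snd q)) else 0))"
    by (rule Ic_sum[OF mu]) (auto intro: cb)
  also have "\<dots> = (\<Sum>q\<in>?Q. Ic \<mu> (\<lambda>y. if y \<in> A (snd q) (fst q) then K (nb y (fst q)) y else 0))"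
    by (intro sum.cong refl) (simp add: trm)
  also have "\<dots> = (\<Sum>q\<in>?Q. Ic \<mu> (\<lambda>y. if y \<in> A (fst q) (snd q) then K (nb y (snd q)) y else 0))"
    by (rule sum.reindex_bij_witness[where i="\<lambda>q. (snd q, fst q)" and j="\<lambda>q. (snd q, fst q)"]) (auto cong: if_cong)
  also have "\<dots> = Ic \<mu> (\<lambda>y. \<Sum>q\<in>?Q. if y \<in> A (fst q) (snd q) then K (nb y (snd q)) y else 0)"
    by (rule Ic_sum[OF mu, symmetric]) (auto intro: cb2)
  also have "\<dots> = Ic \<mu> (\<lambda>y. \<Sum>x\<in>ball y r. K x y)"
    using dec2 by simp
  finally show ?thesis .
qed


definition tr :: "('a::metric_space set \<Rightarrow> real) \<Rightarrow> 'a op \<Rightarrow> complex" where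
  "tr \<mu> T = Ic \<mu> (\<lambda>x. ent T x x)"

lemma ent_bound:
  assumes "\<And>f. ell2_norm (T f) \<le> C * ell2_norm f"
  shows "cmod (ent T x y) \<le> C"
  using coord_le[of "T (delta y)" x] assms[of "delta y"] unfolding ent_def by simp

lemma diag_cbdd:
  assumes "bounded_op T"
  shows "cbdd (\<lambda>x. ent T x x)"
proof -
  obtain C where C: "C \<ge> 0" "\<And>f. ell2_norm (T f) \<le> C * ell2_norm f" using bop_bound[OF assms] by blast
  have "cmod (ent T x x) \<le> C" for x by (rule ent_bound) (rule C(2))
  thus ?thesis unfolding cbdd_def by blast
qed

lemma fp_R:
  assumes "finite_propagation T"
  obtains R where "R \<ge> 0" "\<And>x y. ent T x y \<noteq> 0 \<Longrightarrow> dist x y \<le> R"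
proof -
  obtain R where R: "\<And>x y. Rep_ell2 (T (delta y)) x \<noteq> 0 \<Longrightarrow> dist x y \<le> R"
    using assms unfolding finite_propagation_def by blast
  show ?thesis by (rule that[of "max R 0"]) (use R in \<open>force simp: ent_def\<close>)+
qed

lemma ent_comp:
  assumes a: "bounded_op a" and c: "bounded_op c" and fin: "finite (ball x r)"
    and R: "\<And>y. ent c y x \<noteq> 0 \<Longrightarrow> dist y x < r"
  shows "ent (a \<circ> c) z x = (\<Sum>y\<in>ball x r. ent c y x * ent a z y)"
proof -
  have "Rep_ell2 (a (c (delta x))) z = (\<Sum>y\<in>ball x r. Rep_ell2 (c (delta x)) y * ent a z y)"
  proof (rule bop_finite[OF a fin])
    show "\<forall>y. y \<notin> ball x r \<longrightarrow> Rep_ell2 (c (delta x)) y = 0"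
      using R by (auto simp: ent_def dist_commute)
  qed
  thus ?thesis by (simp add: ent_def)
qed

lemma trace_fp:
  fixes a c :: "'a::metric_space op"
  assumes mu: "fam \<mu>" and inv: "inv_mu \<mu>"
    and a: "bounded_op a" and c: "bounded_op c"
    and Ra: "\<And>x y. ent a x y \<noteq> 0 \<Longrightarrow> dist x y \<le> R"
    and Rc: "\<And>x y. ent c x y \<noteq> 0 \<Longrightarrow> dist x y \<le> R"
    and fin: "\<And>x::'a. finite (ball x (R + 1))" and card: "\<And>x::'a. card (ball x (R + 1)) \<le> N"
  shows "tr \<mu> (a \<circ> c) = tr \<mu> (c \<circ> a)"
proof -
  obtain Ca where Ca: "Ca \<ge> 0" "\<And>f. ell2_norm (a f) \<le> Ca * ell2_norm f" using bop_bound[OF a] by blast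
  obtain Cc where Cc: "Cc \<ge> 0" "\<And>f. ell2_norm (c f) \<le> Cc * ell2_norm f" using bop_bound[OF c] by blast
  define K where "K = (\<lambda>x y. ent a x y * ent c y x)"
  have Kb: "cmod (K x y) \<le> Ca * Cc" for x y
    unfolding K_def norm_mult by (rule mult_mono[OF ent_bound[OF Ca(2)] ent_bound[OF Cc(2)]]) (use Ca in auto)
  have 1: "ent (a \<circ> c) x x = (\<Sum>y\<in>ball x (R + 1). K x y)" for x
    unfolding K_def by (subst ent_comp[OF a c fin]) (use Rc in \<open>force\<close>, simp add: mult.commute)
  have 2: "ent (c \<circ> a) y y = (\<Sum>x\<in>ball y (R + 1). K x y)" for y
    unfolding K_def by (subst ent_comp[OF c a fin]) (use Ra in \<open>force\<close>, simp add: mult.commute)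
  show ?thesis unfolding tr_def 1 2
    by (rule exchange[OF mu inv fin card Kb])
qed

lemma norm_Rep_le_od:
  assumes c: "bounded_op c" and c': "bounded_op c'" and Cc: "\<And>f. ell2_norm (c f) \<le> Cc * ell2_norm f"
  shows "ell2_norm (c' (delta x)) \<le> Cc + op_dist c c'"
proof -
  let ?f = "Rep_ell2 (c (delta x))" and ?g = "\<lambda>y. Rep_ell2 (c (delta x)) y - Rep_ell2 (c' (delta x)) y"
  have "fnorm2 (\<lambda>y. ?f y - ?g y) \<le> fnorm2 ?f + fnorm2 ?g"
    by (rule fnorm2_diff_triangle) (simp_all add: sq_diff)
  moreover have "(\<lambda>y. ?f y - ?g y) = Rep_ell2 (c' (delta x))" by auto
  moreover have "fnorm2 ?f \<le> Cc" using Cc[of "delta x"] ell2_norm_delta[of x] by (simp add: ell2_norm_def)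
  moreover have "fnorm2 ?g \<le> op_dist c c'" by (rule od_le[OF c c']) simp
  ultimately show ?thesis by (simp add: ell2_norm_def)
qed

lemma ent_comp_close:
  assumes a: "bounded_op a" and a': "bounded_op a'" and c: "bounded_op c" and c': "bounded_op c'"
    and Ca: "Ca \<ge> 0" "\<And>f. ell2_norm (a f) \<le> Ca * ell2_norm f"
    and Cc: "\<And>x. ell2_norm (c' (delta x)) \<le> Cc + op_dist c c'"
  shows "cmod (ent (a \<circ> c) x x - ent (a' \<circ> c') x x) \<le> Ca * op_dist c c' + op_dist a a' * (Cc + op_dist c c')"
proof -
  define w where "w = Abs_ell2 (\<lambda>y. Rep_ell2 (c (delta x)) y - Rep_ell2 (c' (delta x)) y)"
  have Rw: "Rep_ell2 w = (\<lambda>y. Rep_ell2 (c (delta x)) y - Rep_ell2 (c' (delta x)) y)"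
    unfolding w_def by (rule Rep_Abs[OF sq_diff[OF sq_Rep sq_Rep]])
  have d1: "Rep_ell2 (a (c (delta x))) x - Rep_ell2 (a (c' (delta x))) x = Rep_ell2 (a w) x"
    by (rule bop_diff[OF a, of w "c (delta x)" "c' (delta x)", symmetric]) (simp add: Rw)
  have "cmod (Rep_ell2 (a w) x) \<le> Ca * ell2_norm w" using coord_le[of "a w" x] Ca(2)[of w] by simp
  also have "\<dots> \<le> Ca * op_dist c c'"
    using od_le[OF c c', of "delta x"] by (intro mult_left_mono[OF _ Ca(1)]) (simp add: ell2_norm_delta[unfolded ell2_norm_def] ell2_norm_def Rw)
  finally have e1: "cmod (Rep_ell2 (a (c (delta x))) x - Rep_ell2 (a (c' (delta x))) x) \<le> Ca * op_dist c c'"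
    using d1 by simp
  have "cmod (Rep_ell2 (a (c' (delta x))) x - Rep_ell2 (a' (c' (delta x))) x)
       \<le> fnorm2 (\<lambda>y. Rep_ell2 (a (c' (delta x))) y - Rep_ell2 (a' (c' (delta x))) y)"
    by (rule fnorm2_coord[OF sq_diff[OF sq_Rep sq_Rep]])
  also have "\<dots> \<le> op_dist a a' * ell2_norm (c' (delta x))" by (rule od_scaled[OF a a'])
  also have "\<dots> \<le> op_dist a a' * (Cc + op_dist c c')"
    by (rule mult_left_mono[OF Cc od_nonneg[OF a a']])
  finally have e2: "cmod (Rep_ell2 (a (c' (delta x))) x - Rep_ell2 (a' (c' (delta x))) x) \<le> op_dist a a' * (Cc + op_dist c c')" .
  have "ent (a \<circ> c) x x - ent (a' \<circ> c') x x
      = (Rep_ell2 (a (c (delta x))) x - Rep_ell2 (a (c' (delta x))) x) + (Rep_ell2 (a (c' (delta x))) x - Rep_ell2 (a' (c' (delta x))) x)"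
    by (simp add: ent_def)
  also have "cmod \<dots> \<le> Ca * op_dist c c' + op_dist a a' * (Cc + op_dist c c')"
    using norm_triangle_ineq[of "Rep_ell2 (a (c (delta x))) x - Rep_ell2 (a (c' (delta x))) x"
      "Rep_ell2 (a (c' (delta x))) x - Rep_ell2 (a' (c' (delta x))) x"] e1 e2 by linarith
  finally show ?thesis .
qed

lemma trace_roe:
  fixes a c :: "'a::metric_space op"
  assumes mu: "fam \<mu>" and inv: "inv_mu \<mu>" and ulf: "ulf TYPE('a)"
    and a: "a \<in> uniform_roe" and c: "c \<in> uniform_roe"
  shows "tr \<mu> (a \<circ> c) = tr \<mu> (c \<circ> a)"
proof -
  have ba: "bounded_op a" and bc: "bounded_op c" using a c by (auto intro: roe_bop)
  obtain Ca where Ca: "Ca \<ge> 0" "\<And>f. ell2_norm (a f) \<le> Ca * ell2_norm f" using bop_bound[OF ba] by blast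
  obtain Cc where Cc: "Cc \<ge> 0" "\<And>f. ell2_norm (c f) \<le> Cc * ell2_norm f" using bop_bound[OF bc] by blast
  have mU: "\<mu> UNIV \<ge> 0" using fam_nonneg[OF mu] .
  have "cmod (tr \<mu> (a \<circ> c) - tr \<mu> (c \<circ> a)) \<le> 1 * e" if e: "e > 0" for e
  proof -
    define d where "d = min 1 (e / (4 * (\<mu> UNIV + 1) * (Ca + Cc + 1)))"
    have d: "d > 0" "d \<le> 1" unfolding d_def using e mU Ca(1) Cc(1) by auto
    have pos: "0 < 4 * (\<mu> UNIV + 1) * (Ca + Cc + 1)" using mU Ca(1) Cc(1) by simp
    have "d \<le> e / (4 * (\<mu> UNIV + 1) * (Ca + Cc + 1))" unfolding d_def by simp
    hence dsmall: "4 * (\<mu> UNIV + 1) * (Ca + Cc + 1) * d \<le> e"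
      using pos by (simp add: pos_le_divide_eq mult.commute)
    obtain a' where a': "bounded_op a'" "finite_propagation a'" "op_dist a a' < d" using roe_approx[OF a d(1)] by blast
    obtain c' where c': "bounded_op c'" "finite_propagation c'" "op_dist c c' < d" using roe_approx[OF c d(1)] by blast
    obtain R1 where R1: "R1 \<ge> 0" "\<And>x y. ent a' x y \<noteq> 0 \<Longrightarrow> dist x y \<le> R1" using fp_R[OF a'(2)] by blast
    obtain R2 where R2: "R2 \<ge> 0" "\<And>x y. ent c' x y \<noteq> 0 \<Longrightarrow> dist x y \<le> R2" using fp_R[OF c'(2)] by blast
    define R where "R = max R1 R2"
    have "R + 1 > 0" using R1(1) unfolding R_def by simp
    then obtain N where N: "\<And>x::'a. finite (ball x (R + 1)) \<and> card (ball x (R + 1)) \<le> N"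
      using ulf unfolding ulf_def by blast
    have tfp: "tr \<mu> (a' \<circ> c') = tr \<mu> (c' \<circ> a')"
      by (rule trace_fp[OF mu inv a'(1) c'(1), of R N])
         (use R1 R2 N in \<open>force simp: R_def\<close>)+
    have da: "0 \<le> op_dist a a'" "op_dist a a' \<le> d" using od_nonneg[OF ba a'(1)] a'(3) by auto
    have dc: "0 \<le> op_dist c c'" "op_dist c c' \<le> d" using od_nonneg[OF bc c'(1)] c'(3) by auto
    have Cc': "\<And>x. ell2_norm (c' (delta x)) \<le> Cc + op_dist c c'" by (rule norm_Rep_le_od[OF bc c'(1) Cc(2)])
    have Ca': "\<And>x. ell2_norm (a' (delta x)) \<le> Ca + op_dist a a'" by (rule norm_Rep_le_od[OF ba a'(1) Ca(2)])
    have b1: "cmod (ent (a \<circ> c) x x - ent (a' \<circ> c') x x) \<le> Ca * d + d * (Cc + d)" for x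
    proof -
      have "cmod (ent (a \<circ> c) x x - ent (a' \<circ> c') x x) \<le> Ca * op_dist c c' + op_dist a a' * (Cc + op_dist c c')"
        by (rule ent_comp_close[OF ba a'(1) bc c'(1) Ca Cc'])
      also have "\<dots> \<le> Ca * d + d * (Cc + d)"
        using da dc Ca(1) Cc(1) by (intro add_mono mult_mono) auto
      finally show ?thesis .
    qed
    have b2: "cmod (ent (c \<circ> a) x x - ent (c' \<circ> a') x x) \<le> Cc * d + d * (Ca + d)" for x
    proof -
      have "cmod (ent (c \<circ> a) x x - ent (c' \<circ> a') x x) \<le> Cc * op_dist a a' + op_dist c c' * (Ca + op_dist a a')"
        by (rule ent_comp_close[OF bc c'(1) ba a'(1) Cc Ca'])
      also have "\<dots> \<le> Cc * d + d * (Ca + d)"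
        using da dc Cc(1) Ca(1) by (intro add_mono mult_mono) auto
      finally show ?thesis .
    qed
    have t1: "cmod (tr \<mu> (a \<circ> c) - tr \<mu> (a' \<circ> c')) \<le> 2 * (Ca * d + d * (Cc + d)) * \<mu> UNIV"
      unfolding tr_def
      by (rule Ic_diff_bound[OF mu diag_cbdd diag_cbdd b1])
         (auto intro: comp_bop ba bc a'(1) c'(1))
    have t2: "cmod (tr \<mu> (c \<circ> a) - tr \<mu> (c' \<circ> a')) \<le> 2 * (Cc * d + d * (Ca + d)) * \<mu> UNIV"
      unfolding tr_def
      by (rule Ic_diff_bound[OF mu diag_cbdd diag_cbdd b2])
         (auto intro: comp_bop ba bc a'(1) c'(1))
    have "cmod (tr \<mu> (a \<circ> c) - tr \<mu> (c \<circ> a))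
        \<le> cmod (tr \<mu> (a \<circ> c) - tr \<mu> (a' \<circ> c')) + cmod (tr \<mu> (c \<circ> a) - tr \<mu> (c' \<circ> a'))"
      using tfp norm_triangle_ineq4[of "tr \<mu> (a \<circ> c) - tr \<mu> (a' \<circ> c')" "tr \<mu> (c \<circ> a) - tr \<mu> (c' \<circ> a')"]
      by (simp add: algebra_simps)
    also have "\<dots> \<le> 2 * (Ca * d + d * (Cc + d)) * \<mu> UNIV + 2 * (Cc * d + d * (Ca + d)) * \<mu> UNIV"
      using t1 t2 by linarith
    also have "\<dots> \<le> 4 * (\<mu> UNIV + 1) * (Ca + Cc + 1) * d"
    proof -
      have dd: "d * d \<le> d" using d by (simp add: mult_le_cancel_left1)
      have X: "Ca * d + d * (Cc + d) \<le> (Ca + Cc + 1) * d" using dd by (simp add: algebra_simps)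
      have Y: "Cc * d + d * (Ca + d) \<le> (Ca + Cc + 1) * d" using dd by (simp add: algebra_simps)
      have "2 * (Ca * d + d * (Cc + d)) * \<mu> UNIV + 2 * (Cc * d + d * (Ca + d)) * \<mu> UNIV
          \<le> 2 * ((Ca + Cc + 1) * d) * \<mu> UNIV + 2 * ((Ca + Cc + 1) * d) * \<mu> UNIV"
        using X Y mU by (intro add_mono mult_right_mono) auto
      also have "\<dots> = 4 * \<mu> UNIV * (Ca + Cc + 1) * d" by (simp add: algebra_simps)
      also have "\<dots> \<le> 4 * (\<mu> UNIV + 1) * (Ca + Cc + 1) * d"
        using d Ca(1) Cc(1) by (intro mult_right_mono) auto
      finally show ?thesis .
    qed
    also have "\<dots> \<le> e" by (rule dsmall)
    finally show ?thesis by simp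
  qed
  hence "tr \<mu> (a \<circ> c) - tr \<mu> (c \<circ> a) = 0" by (intro eps_zero[of 1]) auto
  thus ?thesis by simp
qed


definition emul :: "('a \<Rightarrow> real) \<Rightarrow> complex \<Rightarrow> 'a op" where
  "emul h z = mult_op (\<lambda>x. exp (\<i> * z * complex_of_real (h x)))"

lemma hbound:
  fixes h :: "'b \<Rightarrow> real"
  assumes "bounded (range h)"
  obtains Mh where "Mh \<ge> 0" "\<And>x. \<bar>h x\<bar> \<le> Mh"
proof -
  obtain a where a: "\<And>x. norm (h x) \<le> a" using assms unfolding bounded_iff by blast
  show ?thesis using that[of a] a[of undefined] a by force
qed

lemma exp_bound:
  assumes "\<And>x. \<bar>h x\<bar> \<le> Mh"
  shows "cmod (exp (\<i> * z * complex_of_real (h x))) \<le> exp (cmod z * Mh)"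
proof -
  have "Re (\<i> * z * complex_of_real (h x)) = - Im z * h x" by simp
  also have "\<dots> \<le> \<bar>Im z\<bar> * \<bar>h x\<bar>" by (simp add: abs_mult[symmetric] abs_le_iff)
  also have "\<dots> \<le> cmod z * Mh"
    using assms[of x] abs_Im_le_cmod[of z] by (intro mult_mono) auto
  finally show ?thesis by simp
qed

lemma emul_bop: "(\<And>x. \<bar>h x\<bar> \<le> Mh) \<Longrightarrow> bounded_op (emul h z)"
  unfolding emul_def by (rule mult_bop, rule exp_bound)

lemma Rep_emul: "(\<And>x. \<bar>h x\<bar> \<le> Mh) \<Longrightarrow> Rep_ell2 (emul h z f) y = exp (\<i> * z * complex_of_real (h y)) * Rep_ell2 f y"
  unfolding emul_def by (rule Rep_mult, rule exp_bound)

lemma ent_conj: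
  assumes Mh: "\<And>x. \<bar>h x\<bar> \<le> Mh" and b: "bounded_op b"
  shows "ent (emul h z \<circ> b \<circ> emul h w) x y
       = exp (\<i> * z * complex_of_real (h x)) * ent b x y * exp (\<i> * w * complex_of_real (h y))"
proof -
  have 1: "Rep_ell2 (emul h w (delta y)) x' = exp (\<i> * w * complex_of_real (h y)) * Rep_ell2 (delta y) x'" for x'
    by (simp add: Rep_emul[OF Mh] Rep_delta)
  have "Rep_ell2 (b (emul h w (delta y))) x = exp (\<i> * w * complex_of_real (h y)) * Rep_ell2 (b (delta y)) x"
    by (rule bop_scale[OF b 1])
  thus ?thesis by (simp add: ent_def Rep_emul[OF Mh])
qed

lemma sigma_emul: "sigma h t b = emul h (complex_of_real t) \<circ> b \<circ> emul h (- complex_of_real t)"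
  unfolding sigma_def emul_def by (simp add: mult.assoc)

lemma G_bound:
  fixes s :: complex
  assumes P: "bounded_op P" and Q: "bounded_op Q" and D: "bounded_op D"
  defines "G \<equiv> (\<lambda>f x. (Rep_ell2 (P f) x - Rep_ell2 (Q f) x) / s - Rep_ell2 (D f) x)"
  obtains B where "\<And>f. ell2_norm f \<le> 1 \<Longrightarrow> fnorm2 (G f) \<le> B" "\<And>f. sq (G f)"
proof -
  obtain CP where CP: "CP \<ge> 0" "\<And>f. ell2_norm (P f) \<le> CP * ell2_norm f" using bop_bound[OF P] by blast
  obtain CQ where CQ: "CQ \<ge> 0" "\<And>f. ell2_norm (Q f) \<le> CQ * ell2_norm f" using bop_bound[OF Q] by blast
  obtain CD where CD: "CD \<ge> 0" "\<And>f. ell2_norm (D f) \<le> CD * ell2_norm f" using bop_bound[OF D] by blast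
  have Geq: "G f = (\<lambda>x. inverse s * (Rep_ell2 (P f) x - Rep_ell2 (Q f) x) - Rep_ell2 (D f) x)" for f
    unfolding G_def by (simp add: divide_inverse mult.commute)
  have sqG: "sq (G f)" for f unfolding Geq by (intro sq_diff sq_scale) simp_all
  have "fnorm2 (G f) \<le> cmod (inverse s) * (CP + CQ) + CD" if f: "ell2_norm f \<le> 1" for f
  proof -
    have "fnorm2 (G f) \<le> fnorm2 (\<lambda>x. inverse s * (Rep_ell2 (P f) x - Rep_ell2 (Q f) x)) + fnorm2 (Rep_ell2 (D f))"
      unfolding Geq by (rule fnorm2_diff_triangle) (intro sq_scale sq_diff, simp_all)
    also have "fnorm2 (\<lambda>x. inverse s * (Rep_ell2 (P f) x - Rep_ell2 (Q f) x))
        = cmod (inverse s) * fnorm2 (\<lambda>x. Rep_ell2 (P f) x - Rep_ell2 (Q f) x)"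
      by (rule fnorm2_scale) (simp add: sq_diff)
    also have "fnorm2 (\<lambda>x. Rep_ell2 (P f) x - Rep_ell2 (Q f) x) \<le> CP + CQ"
    proof -
      have "fnorm2 (\<lambda>x. Rep_ell2 (P f) x - Rep_ell2 (Q f) x) \<le> ell2_norm (P f) + ell2_norm (Q f)"
        unfolding ell2_norm_def by (rule fnorm2_diff_triangle) simp_all
      also have "\<dots> \<le> CP * ell2_norm f + CQ * ell2_norm f" using CP(2)[of f] CQ(2)[of f] by simp
      also have "\<dots> \<le> CP + CQ" using f CP(1) CQ(1) by (intro add_mono) (auto intro: mult_left_le)
      finally show ?thesis .
    qed
    hence "cmod (inverse s) * fnorm2 (\<lambda>x. Rep_ell2 (P f) x - Rep_ell2 (Q f) x) \<le> cmod (inverse s) * (CP + CQ)"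
      by (rule mult_left_mono) simp
    moreover have "fnorm2 (Rep_ell2 (D f)) \<le> CD"
      using CD(2)[of f] f CD(1) mult_left_le[of "ell2_norm f" CD] by (simp add: ell2_norm_def)
    ultimately show ?thesis by linarith
  qed
  thus ?thesis using that sqG by blast
qed

lemma entry_holo:
  assumes F: "entire_op F"
  shows "(\<lambda>z. ent (F z) x y) holomorphic_on UNIV"
  unfolding holomorphic_on_open[OF open_UNIV]
proof
  fix z :: complex
  obtain D where D: "bounded_op D"
    and lim: "((\<lambda>w. comb_norm (\<lambda>f x. (Rep_ell2 (F w f) x - Rep_ell2 (F z f) x) / (w - z) - Rep_ell2 (D f) x)) \<longlongrightarrow> 0) (at z)"
    using F unfolding entire_op_def by blast
  have bF: "bounded_op (F w)" for w using F unfolding entire_op_def by (auto intro: roe_bop)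
  have ev: "eventually (\<lambda>w. norm ((ent (F w) x y - ent (F z) x y) / (w - z) - ent D x y)
     \<le> comb_norm (\<lambda>f x. (Rep_ell2 (F w f) x - Rep_ell2 (F z f) x) / (w - z) - Rep_ell2 (D f) x)) (at z)"
  proof (rule always_eventually, rule allI)
    fix w
    obtain B where B: "\<And>f. ell2_norm f \<le> 1 \<Longrightarrow> fnorm2 ((\<lambda>f x. (Rep_ell2 (F w f) x - Rep_ell2 (F z f) x) / (w - z) - Rep_ell2 (D f) x) f) \<le> B"
      and sqG: "\<And>f. sq ((\<lambda>f x. (Rep_ell2 (F w f) x - Rep_ell2 (F z f) x) / (w - z) - Rep_ell2 (D f) x) f)"
      using G_bound[OF bF bF D, of w z "w - z"] by blast
    have "norm ((ent (F w) x y - ent (F z) x y) / (w - z) - ent D x y)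
        \<le> fnorm2 ((\<lambda>f x. (Rep_ell2 (F w f) x - Rep_ell2 (F z f) x) / (w - z) - Rep_ell2 (D f) x) (delta y))"
      using fnorm2_coord[OF sqG[of "delta y"], of x] by (simp add: ent_def)
    also have "\<dots> \<le> comb_norm (\<lambda>f x. (Rep_ell2 (F w f) x - Rep_ell2 (F z f) x) / (w - z) - Rep_ell2 (D f) x)"
      by (rule cn_ge[OF B]) simp_all
    finally show "norm ((ent (F w) x y - ent (F z) x y) / (w - z) - ent D x y)
        \<le> comb_norm (\<lambda>f x. (Rep_ell2 (F w f) x - Rep_ell2 (F z f) x) / (w - z) - Rep_ell2 (D f) x)" .
  qed
  have "((\<lambda>w. (ent (F w) x y - ent (F z) x y) / (w - z) - ent D x y) \<longlongrightarrow> 0) (at z)"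
    by (rule Lim_null_comparison[OF ev lim])
  hence "((\<lambda>w. (ent (F w) x y - ent (F z) x y) / (w - z)) \<longlongrightarrow> ent D x y) (at z)"
    by (rule LIM_zero_cancel)
  hence "((\<lambda>z. ent (F z) x y) has_field_derivative ent D x y) (at z)"
    by (simp add: has_field_derivative_iff)
  thus "\<exists>f'. ((\<lambda>z. ent (F z) x y) has_field_derivative f') (at z)" by blast
qed

lemma zero_limpt_Reals: "(0::complex) islimpt \<real>"
  unfolding islimpt_approachable
proof (intro allI impI)
  fix e :: real assume e: "e > 0"
  show "\<exists>x'\<in>\<real>. x' \<noteq> 0 \<and> dist x' (0::complex) < e"
    by (rule bexI[where x="complex_of_real (e/2)"]) (use e in auto)
qed

lemma analytic_ext_eq:
  assumes Mh: "\<And>x. \<bar>h x\<bar> \<le> Mh" and b: "bounded_op b" and F: "analytic_ext h b F"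
  shows "F z = emul h z \<circ> b \<circ> emul h (- z)"
proof (rule bop_ext)
  have E: "entire_op F" and R: "\<And>t. F (complex_of_real t) = sigma h t b" using F unfolding analytic_ext_def by auto
  show "bounded_op (F z)" using E unfolding entire_op_def by (auto intro: roe_bop)
  show "bounded_op (emul h z \<circ> b \<circ> emul h (- z))" by (intro comp_bop emul_bop[OF Mh] b)
  fix x y
  define q where "q = (\<lambda>z. exp (\<i> * z * complex_of_real (h x)) * ent b x y * exp (\<i> * (- z) * complex_of_real (h y)))"
  have hq: "q holomorphic_on UNIV" unfolding q_def by (intro holomorphic_intros)
  have hg: "(\<lambda>z. ent (F z) x y) holomorphic_on UNIV" by (rule entry_holo[OF E])
  have "ent (F z) x y - q z = 0"
  proof (rule analytic_continuation[of "\<lambda>z. ent (F z) x y - q z" UNIV \<real> 0 z])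
    show "(\<lambda>z. ent (F z) x y - q z) holomorphic_on UNIV" using hq hg by (intro holomorphic_intros)
    show "(0::complex) islimpt \<real>" by (rule zero_limpt_Reals)
    fix w :: complex assume "w \<in> \<real>"
    then obtain t where t: "w = complex_of_real t" by (auto elim: Reals_cases)
    show "ent (F w) x y - q w = 0"
      unfolding t R sigma_emul q_def by (simp add: ent_conj[OF Mh b])
  qed auto
  thus "ent (F z) x y = ent (emul h z \<circ> b \<circ> emul h (- z)) x y"
    by (simp add: ent_conj[OF Mh b] q_def)
qed


lemma Rep_op_add_scale:
  "Rep_ell2 (op_add a (op_scale c b) f) x = Rep_ell2 (a f) x + c * Rep_ell2 (b f) x"
proof -
  have s1: "Rep_ell2 (op_scale c b f) = (\<lambda>x. c * Rep_ell2 (b f) x)"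
    unfolding op_scale_def by (rule Rep_Abs[OF sq_scale[OF sq_Rep]])
  have sq: "sq (\<lambda>x. Rep_ell2 (a f) x + c * Rep_ell2 (b f) x)" by (rule sq_add[OF sq_Rep sq_scale[OF sq_Rep]])
  show ?thesis unfolding op_add_def s1 using Rep_Abs[OF sq] by simp
qed

lemma ent_inner:
  "ell2_inner (delta x) (a (delta x)) = ent a x x"
proof -
  have "ell2_inner (delta x) (a (delta x)) = (\<Sum>y\<in>{x}. cnj (Rep_ell2 (delta x) y) * Rep_ell2 (a (delta x)) y)"
    unfolding ell2_inner_def by (intro infsumI has_sum_finite_neutralI[of "{x}"]) (auto simp: Rep_delta)
  thus ?thesis by (simp add: Rep_delta ent_def)
qed

lemma ent_emul_left:
  assumes Mh: "\<And>x. \<bar>h x\<bar> \<le> Mh"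
  shows "ent (emul h w \<circ> X) x y = exp (\<i> * w * complex_of_real (h x)) * ent X x y"
  by (simp add: ent_def Rep_emul[OF Mh])

lemma ent_emul_right:
  assumes Mh: "\<And>x. \<bar>h x\<bar> \<le> Mh" and X: "bounded_op X"
  shows "ent (X \<circ> emul h w) x y = exp (\<i> * w * complex_of_real (h y)) * ent X x y"
proof -
  have 1: "Rep_ell2 (emul h w (delta y)) x' = exp (\<i> * w * complex_of_real (h y)) * Rep_ell2 (delta y) x'" for x'
    by (simp add: Rep_emul[OF Mh] Rep_delta)
  show ?thesis unfolding ent_def comp_def by (rule bop_scale[OF X 1])
qed

lemma tr_swap_emul:
  assumes Mh: "\<And>x. \<bar>h x\<bar> \<le> Mh" and X: "bounded_op X"
  shows "tr \<mu> (X \<circ> emul h w) = tr \<mu> (emul h w \<circ> X)"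
  unfolding tr_def by (simp add: ent_emul_right[OF Mh X] ent_emul_left[OF Mh])

lemma emul_inv:
  assumes Mh: "\<And>x. \<bar>h x\<bar> \<le> Mh"
  shows "emul h (- w) \<circ> (emul h w \<circ> Y) = Y"
proof
  fix f
  have "Rep_ell2 (emul h (- w) (emul h w (Y f))) x = Rep_ell2 (Y f) x" for x
    by (simp add: Rep_emul[OF Mh] mult.assoc[symmetric] exp_add[symmetric])
  hence "Rep_ell2 (emul h (- w) (emul h w (Y f))) = Rep_ell2 (Y f)" by blast
  thus "(emul h (- w) \<circ> (emul h w \<circ> Y)) f = Y f" by (simp add: Rep_ell2_inject)
qed

lemma real_div_pos:
  assumes "X \<in> \<real>" "0 \<le> Re X" "r > 0"
  shows "X / complex_of_real r \<in> \<real>" "0 \<le> Re (X / complex_of_real r)"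
proof -
  obtain s where s: "X = complex_of_real s" using assms(1) by (auto elim: Reals_cases)
  have "X / complex_of_real r = complex_of_real (s / r)" by (simp add: s)
  thus "X / complex_of_real r \<in> \<real>" "0 \<le> Re (X / complex_of_real r)" using assms s by auto
qed

theorem amen_to_kms:
  fixes h :: "'a::metric_space \<Rightarrow> real" and \<beta> :: real
  assumes ulf: "ulf TYPE('a)" and hb: "bounded (range h)" and am: "amenable TYPE('a)"
  shows "\<exists>\<phi>. kms_state h \<beta> \<phi>"
proof -
  obtain Mh where Mh0: "Mh \<ge> 0" and Mh: "\<And>x. \<bar>h x\<bar> \<le> Mh" using hbound[OF hb] by blast
  obtain \<mu> :: "'a set \<Rightarrow> real" where m1: "\<forall>A. 0 \<le> \<mu> A" and m2: "\<exists>A. \<mu> A \<noteq> 0"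
    and m3: "\<forall>A B. A \<inter> B = {} \<longrightarrow> \<mu> (A \<union> B) = \<mu> A + \<mu> B"
    and m4: "\<forall>f A B. partial_translation f A B \<longrightarrow> \<mu> A = \<mu> B"
    using am unfolding amenable_def by blast
  have mu: "fam \<mu>" unfolding fam_def using m1 m3 by blast
  have inv: "inv_mu \<mu>" unfolding inv_mu_def using m4 by blast
  have mU: "\<mu> UNIV > 0"
  proof -
    obtain A where "\<mu> A \<noteq> 0" using m2 by blast
    moreover have "0 \<le> \<mu> A" "\<mu> A \<le> \<mu> UNIV" using m1 fam_mono[OF mu, of A UNIV] by auto
    ultimately show ?thesis by linarith
  qed
  define z0 where "z0 = \<i> * complex_of_real \<beta>"
  define k where "k = emul h z0"
  define kf where "kf = (\<lambda>x. exp (\<i> * z0 * complex_of_real (h x)))"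
  have kf_eq: "kf x = complex_of_real (exp (- (\<beta> * h x)))" for x
  proof -
    have "\<i> * z0 * complex_of_real (h x) = complex_of_real (- (\<beta> * h x))"
      unfolding z0_def by (simp add: mult.assoc[symmetric])
    hence "kf x = exp (complex_of_real (- (\<beta> * h x)))" unfolding kf_def by (simp only:)
    also have "\<dots> = complex_of_real (exp (- (\<beta> * h x)))" by (rule exp_of_real)
    finally show ?thesis .
  qed
  define c0 where "c0 = exp (- (\<bar>\<beta>\<bar> * Mh))"
  have c0: "c0 > 0" unfolding c0_def by simp
  have kf_ge: "c0 \<le> Re (kf x)" for x
  proof -
    have "- (\<bar>\<beta>\<bar> * Mh) \<le> - (\<beta> * h x)"
      using Mh[of x] abs_mult[of \<beta> "h x"] abs_ge_self[of "\<beta> * h x"]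
        mult_left_mono[of "\<bar>h x\<bar>" Mh "\<bar>\<beta>\<bar>"] by simp
    thus ?thesis unfolding kf_eq c0_def by simp
  qed
  have bk: "bounded_op k" unfolding k_def by (rule emul_bop[OF Mh])
  have ent_kX: "ent (k \<circ> X) x y = kf x * ent X x y" for X x y
    unfolding k_def kf_def by (rule ent_emul_left[OF Mh])
  have ent_k: "ent k x x = kf x" for x
    using ent_kX[of id x x] by (simp add: ent_def Rep_delta)
  define tk where "tk = tr \<mu> k"
  have cbk: "cbdd kf" using diag_cbdd[OF bk] unfolding ent_k .
  have re: "kf x \<in> \<real>" for x by (simp add: kf_eq)
  have tk_eq: "tk = Ic \<mu> kf" unfolding tk_def tr_def ent_k ..
  have tk: "tk \<in> \<real>" "c0 * \<mu> UNIV \<le> Re tk"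
    unfolding tk_eq by (rule Ic_pos(1)[OF mu cbk re kf_ge], rule Ic_pos(2)[OF mu cbk re kf_ge])
  obtain tkr where tkr: "tk = complex_of_real tkr" "tkr > 0"
    using tk c0 mU by (metis Re_complex_of_real Reals_cases mult_pos_pos order_less_le_trans)
  define \<phi> where "\<phi> = (\<lambda>X. tr \<mu> (k \<circ> X) / tk)"
  have lin: "\<phi> (op_add a (op_scale c b)) = \<phi> a + c * \<phi> b" if a: "a \<in> uniform_roe" and b: "b \<in> uniform_roe" for a b c
  proof -
    have ba: "bounded_op (k \<circ> a)" "bounded_op (k \<circ> b)" using comp_bop[OF bk] roe_bop a b by auto
    have "(\<lambda>x. ent (k \<circ> op_add a (op_scale c b)) x x) = (\<lambda>x. ent (k \<circ> a) x x + c * ent (k \<circ> b) x x)"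
      by (simp add: ent_kX, simp add: ent_def Rep_op_add_scale algebra_simps)
    hence "tr \<mu> (k \<circ> op_add a (op_scale c b)) = tr \<mu> (k \<circ> a) + c * tr \<mu> (k \<circ> b)"
      unfolding tr_def using Ic_add[OF mu diag_cbdd[OF ba(1)] cbdd_scale[OF diag_cbdd[OF ba(2)]]]
        Ic_scale[OF mu diag_cbdd[OF ba(2)]] by simp
    thus ?thesis unfolding \<phi>_def by (simp add: add_divide_distrib)
  qed
  have pos: "\<phi> a \<in> \<real> \<and> 0 \<le> Re (\<phi> a)" if a: "a \<in> uniform_roe" and p: "positive_op a" for a
  proof -
    have ba: "bounded_op (k \<circ> a)" using comp_bop[OF bk] roe_bop a by auto
    have ea: "ent a x x \<in> \<real>" "0 \<le> Re (ent a x x)" for x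
      using p unfolding positive_op_def ent_inner[symmetric] by auto
    have r: "ent (k \<circ> a) x x \<in> \<real>" "0 \<le> Re (ent (k \<circ> a) x x)" for x
    proof -
      obtain s where s: "ent a x x = complex_of_real s" using ea(1)[of x] by (auto elim: Reals_cases)
      have "ent (k \<circ> a) x x = complex_of_real (exp (- (\<beta> * h x)) * s)" by (simp add: ent_kX kf_eq s)
      thus "ent (k \<circ> a) x x \<in> \<real>" "0 \<le> Re (ent (k \<circ> a) x x)" using ea(2)[of x] s by auto
    qed
    have "tr \<mu> (k \<circ> a) \<in> \<real>" "0 * \<mu> UNIV \<le> Re (tr \<mu> (k \<circ> a))"
      unfolding tr_def using Ic_pos[OF mu diag_cbdd[OF ba], of 0] r by auto
    thus ?thesis unfolding \<phi>_def tkr(1) using real_div_pos[OF _ _ tkr(2)] by auto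
  qed
  have one: "\<phi> id = 1" unfolding \<phi>_def tk_def using tkr by (simp add: tk_def[symmetric])
  have kms: "\<phi> (a \<circ> F (\<i> * complex_of_real \<beta>)) = \<phi> (b \<circ> a)"
    if a: "a \<in> uniform_roe" and b: "b \<in> uniform_roe" and F: "analytic_ext h b F" for a b F
  proof -
    have ba: "bounded_op a" and bb: "bounded_op b" using a b by (auto intro: roe_bop)
    have Fz: "F z0 = k \<circ> b \<circ> emul h (- z0)" unfolding k_def by (rule analytic_ext_eq[OF Mh bb F])
    have kb: "k \<circ> b \<in> uniform_roe" unfolding k_def emul_def
      by (rule roe_mult_left[OF b exp_bound[OF Mh]])
    have bX: "bounded_op (k \<circ> a \<circ> k \<circ> b)" by (intro comp_bop bk ba bb)
    have "tr \<mu> (k \<circ> (a \<circ> F z0)) = tr \<mu> ((k \<circ> a \<circ> k \<circ> b) \<circ> emul h (- z0))"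
      unfolding Fz by (simp add: o_assoc)
    also have "\<dots> = tr \<mu> (emul h (- z0) \<circ> (k \<circ> a \<circ> k \<circ> b))" by (rule tr_swap_emul[OF Mh bX])
    also have "\<dots> = tr \<mu> (a \<circ> (k \<circ> b))" unfolding k_def using emul_inv[OF Mh, where w=z0 and Y="a \<circ> (emul h z0 \<circ> b)"]
      by (simp add: o_assoc)
    also have "\<dots> = tr \<mu> ((k \<circ> b) \<circ> a)" by (rule trace_roe[OF mu inv ulf a kb])
    also have "\<dots> = tr \<mu> (k \<circ> (b \<circ> a))" by (simp add: o_assoc)
    finally show ?thesis unfolding \<phi>_def z0_def by simp
  qed
  have "kms_state h \<beta> \<phi>"
    unfolding kms_state_def is_state_def using lin pos one kms by blast
  thus ?thesis by blast
qed


lemma psi_small: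
  assumes e: "e > 0"
  obtains s where "s > 0" "\<And>d::complex. d \<noteq> 0 \<Longrightarrow> cmod d < s \<Longrightarrow> cmod ((exp d - 1 - d) / d) < e"
proof -
  have "((\<lambda>d. (exp d - exp 0) / (d - 0)) \<longlongrightarrow> exp (0::complex)) (at 0)"
    using DERIV_exp[of "0::complex"] unfolding has_field_derivative_iff .
  hence "((\<lambda>d. (exp d - 1) / d) \<longlongrightarrow> (1::complex)) (at 0)" by simp
  hence "((\<lambda>d. (exp d - 1) / d - 1) \<longlongrightarrow> (0::complex)) (at 0)"
    using tendsto_diff[of "\<lambda>d. (exp d - 1) / d" 1 "at 0" "\<lambda>_. 1" 1] by simp
  then obtain s where s: "s > 0" "\<And>x::complex. x \<noteq> 0 \<and> norm (x - 0) < s \<longrightarrow> norm ((exp x - 1) / x - 1 - 0) < e"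
    using e unfolding LIM_eq by blast
  have "cmod ((exp d - 1 - d) / d) < e" if "d \<noteq> 0" "cmod d < s" for d :: complex
  proof -
    have "(exp d - 1 - d) / d = (exp d - 1) / d - 1" using that(1) by (simp add: diff_divide_distrib)
    thus ?thesis using s(2)[of d] that by simp
  qed
  thus ?thesis using that s(1) by blast
qed

lemma q_bound:
  fixes c :: real and w z :: complex
  assumes cK: "\<bar>c\<bar> \<le> K" and wz: "w \<noteq> z" and sd: "K * cmod (w - z) < s"
    and psi: "\<And>d::complex. d \<noteq> 0 \<Longrightarrow> cmod d < s \<Longrightarrow> cmod ((exp d - 1 - d) / d) \<le> e"
    and e: "e \<ge> 0"
  shows "cmod ((exp (\<i> * w * complex_of_real c) - exp (\<i> * z * complex_of_real c)) / (w - z)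
              - \<i> * complex_of_real c * exp (\<i> * z * complex_of_real c)) \<le> exp (cmod z * K) * K * e"
proof (cases "c = 0")
  case True
  have "0 \<le> exp (cmod z * K) * K * e" using cK e by simp
  thus ?thesis using True by simp
next
  case False
  define d where "d = \<i> * complex_of_real c * (w - z)"
  have d0: "d \<noteq> 0" using False wz unfolding d_def by simp
  have dn: "cmod d = \<bar>c\<bar> * cmod (w - z)" unfolding d_def by (simp add: norm_mult)
  have ds: "cmod d < s"
  proof -
    have "\<bar>c\<bar> * cmod (w - z) \<le> K * cmod (w - z)" using cK by (simp add: mult_right_mono)
    thus ?thesis using dn sd by linarith
  qed
  have ew: "exp (\<i> * w * complex_of_real c) = exp (\<i> * z * complex_of_real c) * exp d"
    unfolding d_def exp_add[symmetric] by (simp add: algebra_simps)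
  have "(exp (\<i> * w * complex_of_real c) - exp (\<i> * z * complex_of_real c)) / (w - z)
              - \<i> * complex_of_real c * exp (\<i> * z * complex_of_real c)
      = exp (\<i> * z * complex_of_real c) * (\<i> * complex_of_real c) * ((exp d - 1 - d) / d)"
    unfolding ew using d0 wz unfolding d_def by (simp add: field_simps)
  also have "cmod \<dots> = cmod (exp (\<i> * z * complex_of_real c)) * \<bar>c\<bar> * cmod ((exp d - 1 - d) / d)"
  proof -
    have "cmod (\<i> * complex_of_real c) = \<bar>c\<bar>" by (simp add: norm_mult)
    thus ?thesis unfolding norm_mult by simp
  qed
  also have "\<dots> \<le> exp (cmod z * K) * K * e"
  proof (intro mult_mono)
    have "Re (\<i> * z * complex_of_real c) \<le> cmod z * K"
    proof -
      have "Re (\<i> * z * complex_of_real c) = - Im z * c" by simp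
      also have "\<dots> \<le> \<bar>Im z\<bar> * \<bar>c\<bar>" by (simp add: abs_mult[symmetric] abs_le_iff)
      also have "\<dots> \<le> cmod z * K" using cK abs_Im_le_cmod[of z] by (intro mult_mono) auto
      finally show ?thesis .
    qed
    thus "cmod (exp (\<i> * z * complex_of_real c)) \<le> exp (cmod z * K)" by simp
    show "\<bar>c\<bar> \<le> K" by (rule cK)
    show "cmod ((exp d - 1 - d) / d) \<le> e" by (rule psi[OF d0 ds])
  qed (use e abs_ge_zero[of c] cK in auto)
  finally show ?thesis .
qed

lemma Pop_G:
  assumes inj: "inj_on p B"
    and m1: "\<And>y. cmod (m1 y) \<le> M1" and m2: "\<And>y. cmod (m2 y) \<le> M2" and m3: "\<And>y. cmod (m3 y) \<le> M3"
    and Q: "\<And>y. cmod ((m1 y - m2 y) / s - m3 y) \<le> Q"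
  shows "fnorm2 (\<lambda>x. (Rep_ell2 (Pop p B m1 f) x - Rep_ell2 (Pop p B m2 f) x) / s - Rep_ell2 (Pop p B m3 f) x)
         \<le> Q * ell2_norm f"
proof -
  have Q0: "Q \<ge> 0" using Q[of undefined] norm_ge_zero order_trans by blast
  have eq: "(\<lambda>x. (Rep_ell2 (Pop p B m1 f) x - Rep_ell2 (Pop p B m2 f) x) / s - Rep_ell2 (Pop p B m3 f) x)
      = (\<lambda>y. ((m1 y - m2 y) / s - m3 y) * (if y \<in> B then Rep_ell2 f (p y) else 0))"
    by (auto simp: Rep_Pop[OF inj m1] Rep_Pop[OF inj m2] Rep_Pop[OF inj m3] field_simps)
  have "fnorm2 (\<lambda>y. ((m1 y - m2 y) / s - m3 y) * (if y \<in> B then Rep_ell2 f (p y) else 0))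
       \<le> Q * fnorm2 (\<lambda>y. if y \<in> B then Rep_ell2 f (p y) else 0)"
    by (rule fnorm2_bmult[OF sq_reindex(1)[OF inj sq_Rep] Q])
  also have "\<dots> \<le> Q * ell2_norm f" unfolding ell2_norm_def
    by (rule mult_left_mono[OF sq_reindex(2)[OF inj sq_Rep] Q0])
  finally show ?thesis unfolding eq .
qed

lemma nonneg_mult_positive:
  assumes m: "\<And>x. cmod (m x) \<le> M" and r: "\<And>x. m x \<in> \<real>" and nn: "\<And>x. 0 \<le> Re (m x)"
  shows "positive_op (mult_op m)"
  unfolding positive_op_def
proof
  fix f
  let ?g = "\<lambda>x. cnj (Rep_ell2 f x) * Rep_ell2 (mult_op m f) x"
  have g0: "0 \<le> ?g x" for x
  proof -
    obtain s where s: "m x = complex_of_real s" using r[of x] by (auto elim: Reals_cases)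
    have cc: "cnj (Rep_ell2 f x) * Rep_ell2 f x = complex_of_real ((cmod (Rep_ell2 f x))\<^sup>2)"
      using complex_norm_square[of "Rep_ell2 f x"] by (simp add: mult.commute)
    have "?g x = complex_of_real s * (cnj (Rep_ell2 f x) * Rep_ell2 f x)"
      by (simp add: Rep_mult[OF m] s)
    also have "\<dots> = complex_of_real (s * (cmod (Rep_ell2 f x))\<^sup>2)" by (simp add: cc)
    finally have "?g x = complex_of_real (s * (cmod (Rep_ell2 f x))\<^sup>2)" .
    moreover have "0 \<le> s" using nn[of x] s by simp
    ultimately show ?thesis by (simp add: less_eq_complex_def)
  qed
  have "0 \<le> infsum ?g UNIV"
  proof (cases "?g summable_on UNIV")
    case True thus ?thesis using infsum_nonneg_complex[OF True] g0 by blast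
  next
    case False thus ?thesis using infsum_not_exists[OF False] by simp
  qed
  thus "ell2_inner f (mult_op m f) \<in> \<real> \<and> 0 \<le> Re (ell2_inner f (mult_op m f))"
    unfolding ell2_inner_def by (simp add: less_eq_complex_def complex_is_Real_iff)
qed

lemma mult_roe: "(\<And>x. cmod (m x) \<le> M) \<Longrightarrow> mult_op m \<in> uniform_roe"
  unfolding mult_op_Pop by (rule roeI, rule Pop_bop, auto, rule Pop_fp[of _ _ _ M 0], auto)


lemma exp_i_real_bound: "cmod (exp (\<i> * complex_of_real r)) \<le> 1" "cmod (exp (- \<i> * complex_of_real r)) \<le> 1"
  by simp_all

theorem kms_to_amen:
  fixes h :: "'a::metric_space \<Rightarrow> real" and \<beta> :: real
  assumes hb: "bounded (range h)" and K: "kms_state h \<beta> \<phi>"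
  shows "amenable TYPE('a)"
proof -
  obtain Mh where Mh0: "Mh \<ge> 0" and Mh: "\<And>x. \<bar>h x\<bar> \<le> Mh" using hbound[OF hb] by blast
  have st: "is_state \<phi>" and kms: "\<And>a b F. a \<in> uniform_roe \<Longrightarrow> b \<in> uniform_roe \<Longrightarrow> analytic_ext h b F \<Longrightarrow>
        \<phi> (a \<circ> F (\<i> * complex_of_real \<beta>)) = \<phi> (b \<circ> a)"
    using K unfolding kms_state_def by blast+
  have lin: "\<And>a b c. a \<in> uniform_roe \<Longrightarrow> b \<in> uniform_roe \<Longrightarrow> \<phi> (op_add a (op_scale c b)) = \<phi> a + c * \<phi> b"
    and pos: "\<And>a. a \<in> uniform_roe \<Longrightarrow> positive_op a \<Longrightarrow> \<phi> a \<in> \<real> \<and> 0 \<le> Re (\<phi> a)"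
    and one: "\<phi> id = 1"
    using st unfolding is_state_def by blast+
  define E where "E = (\<lambda>x. complex_of_real (exp (\<beta> * h x)))"
  define EM where "EM = exp (\<bar>\<beta>\<bar> * Mh)"
  define c0 where "c0 = exp (- (\<bar>\<beta>\<bar> * Mh))"
  have bh: "\<bar>\<beta> * h x\<bar> \<le> \<bar>\<beta>\<bar> * Mh" for x
    using Mh[of x] by (simp add: abs_mult mult_left_mono)
  have EMb: "cmod (E x) \<le> EM" for x
    using bh[of x] unfolding E_def EM_def by (simp add: abs_le_iff)
  have c0E: "c0 \<le> exp (\<beta> * h x)" for x
    using bh[of x] unfolding c0_def by (simp add: abs_le_iff)
  have c0: "c0 > 0" unfolding c0_def by simp
  define mA where "mA = (\<lambda>A. mult_op (\<lambda>x. if x \<in> A then E x else 0))"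
  have mAb: "cmod (if x \<in> A then E x else 0) \<le> EM" for A x
    using EMb[of x] by (auto simp: EM_def)
  have mAU: "mA A \<in> uniform_roe" for A unfolding mA_def by (rule mult_roe[OF mAb])
  have RmA: "Rep_ell2 (mA A f) x = (if x \<in> A then E x else 0) * Rep_ell2 f x" for A f x
    unfolding mA_def by (rule Rep_mult[OF mAb])
  define \<mu> where "\<mu> = (\<lambda>A. Re (\<phi> (mA A)))"
  have mu_nn: "0 \<le> \<mu> A" for A
  proof -
    have "positive_op (mA A)" unfolding mA_def
      by (rule nonneg_mult_positive[OF mAb]) (auto simp: E_def)
    thus ?thesis unfolding \<mu>_def using pos[OF mAU] by blast
  qed
  have mu_add: "\<mu> (A \<union> B) = \<mu> A + \<mu> B" if "A \<inter> B = {}" for A B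
  proof -
    have "mA (A \<union> B) = op_add (mA A) (op_scale 1 (mA B))"
    proof
      fix f
      have "Rep_ell2 (mA (A \<union> B) f) x = Rep_ell2 (op_add (mA A) (op_scale 1 (mA B)) f) x" for x
        using that by (auto simp: Rep_op_add_scale RmA)
      thus "mA (A \<union> B) f = op_add (mA A) (op_scale 1 (mA B)) f" using Rep_ell2_inject by blast
    qed
    thus ?thesis unfolding \<mu>_def using lin[OF mAU mAU, of A 1 B] by simp
  qed
  have mu_pos: "\<mu> UNIV > 0"
  proof -
    define P where "P = mult_op (\<lambda>x. E x - complex_of_real c0)"
    have Pb: "cmod (E x - complex_of_real c0) \<le> EM + c0" for x
      using EMb[of x] c0 norm_triangle_ineq4[of "E x" "complex_of_real c0"] by simp
    have PU: "P \<in> uniform_roe" unfolding P_def by (rule mult_roe[OF Pb])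
    have Ppos: "positive_op P" unfolding P_def
      by (rule nonneg_mult_positive[OF Pb]) (auto simp: E_def c0E)
    have idU: "id \<in> uniform_roe" unfolding id_Pop by (rule roeI, rule Pop_bop[of _ _ _ 1], auto, rule Pop_fp[of _ _ _ 1 0], auto)
    have "mA UNIV = op_add P (op_scale (complex_of_real c0) id)"
    proof
      fix f
      have "Rep_ell2 (mA UNIV f) x = Rep_ell2 (op_add P (op_scale (complex_of_real c0) id) f) x" for x
        by (simp add: Rep_op_add_scale RmA P_def Rep_mult[OF Pb] algebra_simps)
      thus "mA UNIV f = op_add P (op_scale (complex_of_real c0) id) f" using Rep_ell2_inject by blast
    qed
    hence "\<phi> (mA UNIV) = \<phi> P + complex_of_real c0" using lin[OF PU idU] one by simp
    thus ?thesis unfolding \<mu>_def using pos[OF PU Ppos] c0 by simp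
  qed
  have mu_inv: "\<mu> A = \<mu> B" if pt: "partial_translation g A B" for g A B
  proof -
    have bij: "bij_betw g A B" and "\<exists>R. \<forall>x\<in>A. dist x (g x) \<le> R" using pt unfolding partial_translation_def by auto
    then obtain R where R: "\<And>x. x \<in> A \<Longrightarrow> dist x (g x) \<le> R" by blast
    define p where "p = inv_into A g"
    have pB: "p y \<in> A" "g (p y) = y" if "y \<in> B" for y
      using that bij unfolding p_def by (auto simp: bij_betw_def intro: inv_into_into f_inv_into_f)
    have gA: "g x \<in> B" "p (g x) = x" if "x \<in> A" for x
      using that bij unfolding p_def by (auto simp: bij_betw_def inv_into_f_f)
    have injp: "inj_on p B" by (rule inj_on_inverseI[of _ g]) (use pB in auto)
    have injg: "inj_on g A" using bij by (simp add: bij_betw_def)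
    have Rp: "dist y (p y) \<le> R" if "y \<in> B" for y
      using R[OF pB(1)[OF that]] pB(2)[OF that] by (simp add: dist_commute)
    define cc where "cc = (\<lambda>y. h y - h (p y))"
    define KK where "KK = 2 * Mh"
    have ccK: "\<bar>cc y\<bar> \<le> KK" for y using Mh[of y] Mh[of "p y"] unfolding cc_def KK_def by linarith
    have KK0: "KK \<ge> 0" unfolding KK_def using Mh0 by simp
    define mF where "mF = (\<lambda>z y. exp (\<i> * z * complex_of_real (cc y)))"
    define F where "F = (\<lambda>z. Pop p B (mF z))"
    have mFb: "cmod (mF z y) \<le> exp (cmod z * KK)" for z y unfolding mF_def by (rule exp_bound[OF ccK])
    have FU: "F z \<in> uniform_roe" for z
      unfolding F_def by (rule roeI, rule Pop_bop[OF injp mFb], rule Pop_fp[OF injp mFb Rp])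
    define V where "V = Pop p B (\<lambda>_. 1)"
    have Vb: "cmod ((\<lambda>_. 1::complex) y) \<le> 1" for y by simp
    have VU: "V \<in> uniform_roe" unfolding V_def by (rule roeI, rule Pop_bop[OF injp Vb], rule Pop_fp[OF injp Vb Rp])
    define a0 where "a0 = Pop g A (\<lambda>x. E (g x))"
    have a0b: "cmod (E (g x)) \<le> EM" for x by (rule EMb)
    have a0U: "a0 \<in> uniform_roe" unfolding a0_def by (rule roeI, rule Pop_bop[OF injg a0b], rule Pop_fp[OF injg a0b R])
    have ent: "entire_op F"
      unfolding entire_op_def
    proof (intro conjI allI)
      fix z show "F z \<in> uniform_roe" by (rule FU)
    next
      fix z
      define mD where "mD = (\<lambda>y. \<i> * complex_of_real (cc y) * exp (\<i> * z * complex_of_real (cc y)))"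
      have mDb: "cmod (mD y) \<le> KK * exp (cmod z * KK)" for y
        unfolding mD_def norm_mult using ccK[of y] exp_bound[of cc KK z y, OF ccK]
        by (intro mult_mono) auto
      define D where "D = Pop p B mD"
      have bD: "bounded_op D" unfolding D_def by (rule Pop_bop[OF injp mDb])
      have lim: "((\<lambda>w. comb_norm (\<lambda>f x. (Rep_ell2 (F w f) x - Rep_ell2 (F z f) x) / (w - z) - Rep_ell2 (D f) x)) \<longlongrightarrow> 0) (at z)"
        unfolding LIM_eq
      proof (intro allI impI)
        fix r :: real assume r: "r > 0"
        define C where "C = exp (cmod z * KK) * KK"
        have C0: "C \<ge> 0" unfolding C_def using KK0 by simp
        define e' where "e' = r / (2 * (C + 1))"
        have e': "e' > 0" unfolding e'_def using r C0 by simp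
        obtain s0 where s0: "s0 > 0" "\<And>d::complex. d \<noteq> 0 \<Longrightarrow> cmod d < s0 \<Longrightarrow> cmod ((exp d - 1 - d) / d) < e'"
          using psi_small[OF e'] by blast
        define s where "s = s0 / (KK + 1)"
        have s: "s > 0" unfolding s_def using s0 KK0 by simp
        have "norm (comb_norm (\<lambda>f x. (Rep_ell2 (F w f) x - Rep_ell2 (F z f) x) / (w - z) - Rep_ell2 (D f) x) - 0) < r"
          if w: "w \<noteq> z \<and> norm (w - z) < s" for w
        proof -
          have Ks: "KK * cmod (w - z) < s0"
          proof -
            have "KK * cmod (w - z) \<le> (KK + 1) * cmod (w - z)" by (simp add: distrib_right)
            also have "\<dots> < (KK + 1) * s" using w KK0 by (intro mult_strict_left_mono) auto
            also have "\<dots> = s0" unfolding s_def using KK0 by simp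
            finally show ?thesis .
          qed
          have qb: "cmod ((mF w y - mF z y) / (w - z) - mD y) \<le> C * e'" for y
            unfolding mF_def mD_def C_def
            by (rule q_bound[OF ccK _ Ks _ less_imp_le[OF e']]) (use w s0(2) in \<open>auto intro: less_imp_le\<close>)
          have fb: "fnorm2 (\<lambda>x. (Rep_ell2 (F w f) x - Rep_ell2 (F z f) x) / (w - z) - Rep_ell2 (D f) x) \<le> C * e'"
            if "ell2_norm f \<le> 1" for f
          proof -
            have "fnorm2 (\<lambda>x. (Rep_ell2 (F w f) x - Rep_ell2 (F z f) x) / (w - z) - Rep_ell2 (D f) x) \<le> (C * e') * ell2_norm f"
              unfolding F_def D_def by (rule Pop_G[OF injp mFb mFb mDb qb])
            also have "\<dots> \<le> C * e'" using that C0 e' by (simp add: mult_left_le)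
            finally show ?thesis .
          qed
          have "comb_norm (\<lambda>f x. (Rep_ell2 (F w f) x - Rep_ell2 (F z f) x) / (w - z) - Rep_ell2 (D f) x) \<le> C * e'"
            by (rule cn_upper) (rule fb)
          moreover have "0 \<le> comb_norm (\<lambda>f x. (Rep_ell2 (F w f) x - Rep_ell2 (F z f) x) / (w - z) - Rep_ell2 (D f) x)"
            by (rule cn_nonneg) (rule fb)
          moreover have "C * e' < r"
          proof -
            have "C * e' \<le> (C + 1) * e'" using e' by (simp add: distrib_right)
            also have "\<dots> = r / 2" unfolding e'_def using C0 by (simp add: field_simps)
            finally show ?thesis using r by simp
          qed
          ultimately show ?thesis by simp
        qed
        thus "\<exists>s>0. \<forall>w. w \<noteq> z \<and> norm (w - z) < s \<longrightarrow>
            norm (comb_norm (\<lambda>f x. (Rep_ell2 (F w f) x - Rep_ell2 (F z f) x) / (w - z) - Rep_ell2 (D f) x) - 0) < r"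
          using s by blast
      qed
      show "\<exists>D. bounded_op D \<and> ((\<lambda>w. comb_norm (\<lambda>f x. (Rep_ell2 (F w f) x - Rep_ell2 (F z f) x) / (w - z) - Rep_ell2 (D f) x)) \<longlongrightarrow> 0) (at z)"
        using bD lim by blast
    qed
    have sig: "F (complex_of_real t) = sigma h t V" for t
    proof
      fix f
      have "Rep_ell2 (F (complex_of_real t) f) y = Rep_ell2 (sigma h t V f) y" for y
      proof -
        have e1: "cmod (exp (\<i> * complex_of_real (t * h x))) \<le> 1" for x by simp
        have e2: "cmod (exp (- \<i> * complex_of_real (t * h x))) \<le> 1" for x by simp
        have ex: "exp (\<i> * complex_of_real t * complex_of_real (cc y))
            = exp (\<i> * complex_of_real (t * h y)) * exp (- \<i> * complex_of_real (t * h (p y)))"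
          unfolding cc_def exp_add[symmetric] by (simp add: algebra_simps)
        have r1: "Rep_ell2 (sigma h t V f) y = exp (\<i> * complex_of_real (t * h y)) * Rep_ell2 (V (mult_op (\<lambda>x. exp (- \<i> * complex_of_real (t * h x))) f)) y"
          unfolding sigma_def comp_def by (rule Rep_mult[OF e1])
        have r2: "Rep_ell2 (V (mult_op (\<lambda>x. exp (- \<i> * complex_of_real (t * h x))) f)) y
            = (if y \<in> B then 1 * Rep_ell2 (mult_op (\<lambda>x. exp (- \<i> * complex_of_real (t * h x))) f) (p y) else 0)"
          unfolding V_def by (rule Rep_Pop[OF injp Vb])
        have r3: "Rep_ell2 (mult_op (\<lambda>x. exp (- \<i> * complex_of_real (t * h x))) f) (p y)
            = exp (- \<i> * complex_of_real (t * h (p y))) * Rep_ell2 f (p y)"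
          by (rule Rep_mult[OF e2])
        have r4: "Rep_ell2 (F (complex_of_real t) f) y = (if y \<in> B then mF (complex_of_real t) y * Rep_ell2 f (p y) else 0)"
          unfolding F_def by (rule Rep_Pop[OF injp mFb])
        show ?thesis unfolding r1 r2 r3 r4 mF_def ex by simp
      qed
      thus "F (complex_of_real t) f = sigma h t V f" using Rep_ell2_inject by blast
    qed
    have aext: "analytic_ext h V F" unfolding analytic_ext_def using ent sig by blast
    have Eg: "E (g x) * mF (\<i> * complex_of_real \<beta>) (g x) = E x" if "x \<in> A" for x
    proof -
      have "\<i> * (\<i> * complex_of_real \<beta>) * complex_of_real (cc (g x)) = complex_of_real (- (\<beta> * (h (g x) - h x)))"
        unfolding cc_def using gA[OF that] by (simp add: mult.assoc[symmetric])
      hence "mF (\<i> * complex_of_real \<beta>) (g x) = complex_of_real (exp (- (\<beta> * (h (g x) - h x))))"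
        unfolding mF_def by (simp only: exp_of_real)
      hence "E (g x) * mF (\<i> * complex_of_real \<beta>) (g x) = complex_of_real (exp (\<beta> * h (g x)) * exp (- (\<beta> * (h (g x) - h x))))"
        unfolding E_def by simp
      also have "exp (\<beta> * h (g x)) * exp (- (\<beta> * (h (g x) - h x))) = exp (\<beta> * h x)"
        by (simp add: exp_add[symmetric] algebra_simps)
      finally show ?thesis unfolding E_def .
    qed
    have 1: "a0 \<circ> F (\<i> * complex_of_real \<beta>) = mA A"
    proof
      fix f
      have "Rep_ell2 (a0 (F (\<i> * complex_of_real \<beta>) f)) x = Rep_ell2 (mA A f) x" for x
      proof (cases "x \<in> A")
        case True
        show ?thesis unfolding a0_def F_def
          using True gA[OF True] Eg[OF True]
          by (simp add: Rep_Pop[OF injg a0b] Rep_Pop[OF injp mFb] RmA mult.assoc[symmetric])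
      next
        case False
        show ?thesis unfolding a0_def F_def using False by (simp add: Rep_Pop[OF injg a0b] RmA)
      qed
      hence "Rep_ell2 (a0 (F (\<i> * complex_of_real \<beta>) f)) = Rep_ell2 (mA A f)" by blast
      thus "(a0 \<circ> F (\<i> * complex_of_real \<beta>)) f = mA A f" by (simp add: Rep_ell2_inject)
    qed
    have 2: "V \<circ> a0 = mA B"
    proof
      fix f
      have "Rep_ell2 (V (a0 f)) y = Rep_ell2 (mA B f) y" for y
        unfolding V_def a0_def using pB by (simp add: Rep_Pop[OF injg a0b] Rep_Pop[OF injp Vb] RmA)
      hence "Rep_ell2 (V (a0 f)) = Rep_ell2 (mA B f)" by blast
      thus "(V \<circ> a0) f = mA B f" by (simp add: Rep_ell2_inject)
    qed
    have "\<phi> (mA A) = \<phi> (mA B)" using kms[OF a0U VU aext] unfolding 1 2 .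
    thus ?thesis unfolding \<mu>_def by simp
  qed
  show ?thesis unfolding amenable_def
  proof (intro exI[of _ \<mu>] conjI allI impI)
    show "\<exists>A. \<mu> A \<noteq> 0" using mu_pos by (intro exI[of _ UNIV]) simp
  qed (use mu_nn mu_add mu_inv in auto)
qed


theorem theorem2p4:
  fixes h :: "'a::metric_space \<Rightarrow> real" and \<beta> :: real
  assumes "ulf TYPE('a)"
    and "bounded (range h)"
  shows "(\<exists>\<phi>. kms_state h \<beta> \<phi>) \<longleftrightarrow> amenable TYPE('a)"
proof
  assume "\<exists>\<phi>. kms_state h \<beta> \<phi>"
  then obtain \<phi> where "kms_state h \<beta> \<phi>" by blast
  thus "amenable TYPE('a)" by (rule kms_to_amen[OF assms(2)])
next
  assume "amenable TYPE('a)"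
  thus "\<exists>\<phi>. kms_state h \<beta> \<phi>" by (rule amen_to_kms[OF assms])
qed

end
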